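(* Let $Z_{G,\epsilon}=x(x-\epsilon)\partial_x+\chi(u_1u_2,x,\epsilon)(u_1\partial_{u_1}-u_2\partial_{u_2})$. A germ of vector field $\xi$ in the $(u,x)$-space (depending on $\epsilon$) is a vertical infinitesimal symplectic symmetry of $Z_{G,\epsilon}$, i.e. satisfies (i) $\xi\cdot x=0$, (ii) $\mathcal L_\xi(du_1\wedge du_2)=0$, (iii) $[\xi,Z_{G,\epsilon}]=0$, if and only if $\xi=X_{f,x,\epsilon}:=\frac{\partial f}{\partial u_2}\partial_{u_1}-\frac{\partial f}{\partial u_1}\partial_{u_2}$ is the Hamiltonian vector field of some function $f(u,x,\epsilon)$ which is a first integral of $Z_{G,\epsilon}$, i.e. $Z_{G,\epsilon}\cdot f=0$.
   Context: $\chi(h,x,\epsilon)=\chi^{(0)}(h,\epsilon)+x\chi^{(1)}(h,\epsilon)$ is an analytic germ, affine in $x$, with $\chi(0,0,0)\ne0$; $Z_{G,\epsilon}$ is the model (formal normal form) vector field, Hamiltonian with respect to $G(h,x,\epsilon)=\int_0^h\chi(s,x,\epsilon)\,ds$ in the fibers $x=\mathrm{const}$. *)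

theory Defs
  imports "HOL-Analysis.Analysis"
begin

text \<open>Holomorphic functions of several complex variables on an open set, defined
  (Osgood) as continuous and holomorphic in each variable separately.\<close>

definition hol2 :: "(complex \<times> complex) set \<Rightarrow> (complex \<Rightarrow> complex \<Rightarrow> complex) \<Rightarrow> bool" where
  "hol2 S g \<longleftrightarrow> open S \<and> continuous_on S (\<lambda>(a, b). g a b) \<and>
     (\<forall>(a, b) \<in> S. (\<lambda>v. g v b) field_differentiable at a \<and> (\<lambda>v. g a v) field_differentiable at b)"

type_synonym pt4 = "complex \<times> complex \<times> complex \<times> complex"
type_synonym fun4 = "complex \<Rightarrow> complex \<Rightarrow> complex \<Rightarrow> complex \<Rightarrow> complex"

text \<open>Functions of \<open>(u1, u2, x, \<epsilon>)\<close>.\<close>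
definition hol4 :: "pt4 set \<Rightarrow> fun4 \<Rightarrow> bool" where
  "hol4 S f \<longleftrightarrow> open S \<and> continuous_on S (\<lambda>(a, b, c, d). f a b c d) \<and>
     (\<forall>(a, b, c, d) \<in> S.
        (\<lambda>v. f v b c d) field_differentiable at a \<and>
        (\<lambda>v. f a v c d) field_differentiable at b \<and>
        (\<lambda>v. f a b v d) field_differentiable at c \<and>
        (\<lambda>v. f a b c v) field_differentiable at d)"

definition pd_u1 :: "fun4 \<Rightarrow> fun4" where
  "pd_u1 f a b c d = deriv (\<lambda>v. f v b c d) a"
definition pd_u2 :: "fun4 \<Rightarrow> fun4" where
  "pd_u2 f a b c d = deriv (\<lambda>v. f a v c d) b"
definition pd_x :: "fun4 \<Rightarrow> fun4" where
  "pd_x f a b c d = deriv (\<lambda>v. f a b v d) c"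

definition vf_apply :: "fun4 \<Rightarrow> fun4 \<Rightarrow> fun4 \<Rightarrow> fun4 \<Rightarrow> fun4" where
  "vf_apply A B C f a b c d =
     A a b c d * pd_u1 f a b c d + B a b c d * pd_u2 f a b c d + C a b c d * pd_x f a b c d"

definition chi :: "(complex \<Rightarrow> complex \<Rightarrow> complex) \<Rightarrow> (complex \<Rightarrow> complex \<Rightarrow> complex)
     \<Rightarrow> complex \<Rightarrow> complex \<Rightarrow> complex \<Rightarrow> complex" where
  "chi \<chi>0 \<chi>1 h x e = \<chi>0 h e + x * \<chi>1 h e"

definition Z_u1 :: "(complex \<Rightarrow> complex \<Rightarrow> complex) \<Rightarrow> (complex \<Rightarrow> complex \<Rightarrow> complex) \<Rightarrow> fun4" where
  "Z_u1 \<chi>0 \<chi>1 u1 u2 x e = chi \<chi>0 \<chi>1 (u1 * u2) x e * u1"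
definition Z_u2 :: "(complex \<Rightarrow> complex \<Rightarrow> complex) \<Rightarrow> (complex \<Rightarrow> complex \<Rightarrow> complex) \<Rightarrow> fun4" where
  "Z_u2 \<chi>0 \<chi>1 u1 u2 x e = - (chi \<chi>0 \<chi>1 (u1 * u2) x e * u2)"
definition Z_x :: fun4 where
  "Z_x u1 u2 x e = x * (x - e)"

text \<open>Vertical infinitesimal symplectic symmetry of \<open>Z_{G,\<epsilon>}\<close> at a point, for
  \<open>\<xi> = A \<partial>_{u1} + B \<partial>_{u2} + C \<partial>_x\<close>:
  (i) \<open>\<xi>\<cdot>x = 0\<close>; (ii) \<open>\<L>_\<xi>(du1\<and>du2) = 0\<close> on the fibres \<open>x = const\<close>, i.e.
  \<open>\<partial>A/\<partial>u1 + \<partial>B/\<partial>u2 = 0\<close>; (iii) \<open>[\<xi>, Z] = 0\<close> componentwise.\<close>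
definition vert_sympl_symm_at ::
  "(complex \<Rightarrow> complex \<Rightarrow> complex) \<Rightarrow> (complex \<Rightarrow> complex \<Rightarrow> complex) \<Rightarrow> fun4 \<Rightarrow> fun4 \<Rightarrow> fun4 \<Rightarrow> pt4 \<Rightarrow> bool" where
  "vert_sympl_symm_at \<chi>0 \<chi>1 A B C p = (case p of (a, b, c, d) \<Rightarrow>
     C a b c d = 0 \<and>
     pd_u1 A a b c d + pd_u2 B a b c d = 0 \<and>
     vf_apply A B C (Z_u1 \<chi>0 \<chi>1) a b c d - vf_apply (Z_u1 \<chi>0 \<chi>1) (Z_u2 \<chi>0 \<chi>1) Z_x A a b c d = 0 \<and>
     vf_apply A B C (Z_u2 \<chi>0 \<chi>1) a b c d - vf_apply (Z_u1 \<chi>0 \<chi>1) (Z_u2 \<chi>0 \<chi>1) Z_x B a b c d = 0 \<and>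
     vf_apply A B C Z_x a b c d - vf_apply (Z_u1 \<chi>0 \<chi>1) (Z_u2 \<chi>0 \<chi>1) Z_x C a b c d = 0)"

end

theory Submission
  imports Defs "HOL-Complex_Analysis.Complex_Analysis"
begin

definition cker :: "complex \<Rightarrow> real \<Rightarrow> complex \<Rightarrow> real \<Rightarrow> complex" where
  "cker c R z t = (2 * pi * \<i> * R * exp (2 * of_real pi * \<i> * t)) / (2 * of_real pi * \<i> * (circlepath c R t - z)^2)"

lemma CD:
  assumes "continuous_on (cball c R) g" "g holomorphic_on ball c R" "z \<in> ball c R"
  shows "(g has_field_derivative integral {0..1} (\<lambda>t. g (circlepath c R t) * cker c R z t)) (at z)"
proof -
  have "(g has_field_derivative (1 / (2 * of_real pi * \<i>) * contour_integral(circlepath c R) (\<lambda>u. g u / (u-z)^2))) (at z)"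
    by (rule Cauchy_derivative_integral_circlepath(2)[OF assms])
  also have "(1 / (2 * of_real pi * \<i>) * contour_integral(circlepath c R) (\<lambda>u. g u / (u-z)^2))
     = integral {0..1} (\<lambda>t. g (circlepath c R t) * cker c R z t)"
    unfolding contour_integral_integral vector_derivative_circlepath cker_def
    by (simp flip: integral_mult_left integral_mult_right add: field_simps)
  finally show ?thesis .
qed

lemma norm_circ: "R \<ge> 0 \<Longrightarrow> norm (circlepath c R t - c) = R"
  unfolding circlepath by (simp add: norm_mult)

lemma circ_ne: assumes "z \<in> ball c R" shows "circlepath c R t - z \<noteq> 0"
proof
  assume "circlepath c R t - z = 0"
  moreover have "R \<ge> 0" using assms by (auto intro: order.trans[OF zero_le_dist] less_imp_le)
  ultimately have "norm (z - c) = R" using norm_circ[of R c t] by simp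
  then show False using assms by (simp add: dist_norm norm_minus_commute)
qed

lemma cker_cont:
  shows "continuous_on (ball c R \<times> UNIV) (\<lambda>(z,t). cker c R z t)"
proof -
  have "continuous_on (ball c R \<times> UNIV) (\<lambda>x. cker c R (fst x) (snd x))"
    unfolding cker_def
  proof (intro continuous_intros ballI)
    fix x :: "complex \<times> real" assume "x \<in> ball c R \<times> UNIV"
    then show "2 * complex_of_real pi * \<i> * (circlepath c R (snd x) - fst x)\<^sup>2 \<noteq> 0"
      using circ_ne[of "fst x" c R "snd x"] by auto
  qed (auto simp: circlepath intro!: continuous_intros)
  then show ?thesis by (simp add: split_beta)
qed

lemma H1:
  fixes G :: "'p::metric_space \<Rightarrow> complex \<Rightarrow> complex"
  assumes O: "open Om" and cont: "continuous_on Om (\<lambda>(p,z). G p z)"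
    and hol: "\<And>p z. (p,z) \<in> Om \<Longrightarrow> G p field_differentiable at z"
  shows "continuous_on Om (\<lambda>(p,z). deriv (G p) z)"
proof -
  have "isCont (\<lambda>(p,z). deriv (G p) z) x" if xO: "x \<in> Om" for x
  proof -
    obtain p0 z0 where x: "x = (p0,z0)" by force
    obtain A B where AB: "open A" "open B" "x \<in> A \<times> B" "A \<times> B \<subseteq> Om"
      using open_prod_elim[OF O xO] by metis
    obtain R where R: "R > 0" "cball z0 R \<subseteq> B" using open_contains_cball AB x by force
    define F where "F = (\<lambda>x. integral (cbox 0 1) (\<lambda>t. G (fst x) (circlepath z0 R t) * cker z0 R (snd x) t))"
    have eq: "deriv (G p) z = F (p,z)" if p: "p \<in> A" and z: "z \<in> ball z0 R" for p z
    proof -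
      have "G p holomorphic_on B"
        unfolding holomorphic_on_def
        using hol AB p by (meson field_differentiable_at_within mem_Sigma_iff subsetD)
      then have h: "G p holomorphic_on cball z0 R" using R holomorphic_on_subset by blast
      show ?thesis unfolding F_def cbox_interval
        by (auto intro!: DERIV_imp_deriv CD[OF holomorphic_on_imp_continuous_on[OF h]
              holomorphic_on_subset[OF h] z])
    qed
    have Fc: "continuous_on (A \<times> ball z0 R) F"
      unfolding F_def
    proof (rule integral_continuous_on_param[where f="\<lambda>x t. G (fst x) (circlepath z0 R t) * cker z0 R (snd x) t", unfolded split_beta fst_conv snd_conv])
      have sub: "(fst (fst y), circlepath z0 R (snd y)) \<in> Om" if "y \<in> (A \<times> ball z0 R) \<times> {0..1}" for y
      proof -
        have "circlepath z0 R (snd y) \<in> cball z0 R"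
          using norm_circ[of R z0 "snd y"] R by (simp add: dist_norm norm_minus_commute)
        then have "circlepath z0 R (snd y) \<in> B" using R by blast
        moreover have "fst (fst y) \<in> A" using that by (auto simp: mem_Times_iff)
        ultimately show ?thesis using AB(4) by (auto simp: mem_Times_iff)
      qed
      have c1: "continuous_on ((A \<times> ball z0 R) \<times> {0..1}) (\<lambda>y. G (fst (fst y)) (circlepath z0 R (snd y)))"
      proof -
        have hc: "continuous_on ((A \<times> ball z0 R) \<times> {0..1}) (\<lambda>y. (fst (fst y), circlepath z0 R (snd y)))"
          unfolding circlepath by (intro continuous_intros)
        have "(\<lambda>y. (fst (fst y), circlepath z0 R (snd y))) ` ((A \<times> ball z0 R) \<times> {0..1}) \<subseteq> Om"
          using sub by blast
        from continuous_on_compose2[OF cont hc this] show ?thesis by simp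
      qed
      have c2: "continuous_on ((A \<times> ball z0 R) \<times> {0..1}) (\<lambda>y. cker z0 R (snd (fst y)) (snd y))"
      proof -
        have hc: "continuous_on ((A \<times> ball z0 R) \<times> {0..1}) (\<lambda>y. (snd (fst y), snd y))"
          by (intro continuous_intros)
        have "(\<lambda>y. (snd (fst y), snd y)) ` ((A \<times> ball z0 R) \<times> {0..1}) \<subseteq> ball z0 R \<times> UNIV"
          by auto
        from continuous_on_compose2[OF cker_cont hc this] show ?thesis by simp
      qed
      show "continuous_on ((A \<times> ball z0 R) \<times> cbox 0 1)
          (\<lambda>x. G (fst (fst x)) (circlepath z0 R (snd x)) * cker z0 R (snd (fst x)) (snd x))"
        unfolding cbox_interval by (intro continuous_intros c1 c2)
    qed
    have "continuous_on (A \<times> ball z0 R) (\<lambda>(p,z). deriv (G p) z)"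
      by (rule continuous_on_eq[OF Fc]) (auto simp: eq)
    moreover have "open (A \<times> ball z0 R)" using AB by (simp add: open_Times)
    moreover have "x \<in> A \<times> ball z0 R" using AB R x by auto
    ultimately show ?thesis
      using continuous_on_eq_continuous_at by blast
  qed
  then show ?thesis by (simp add: continuous_at_imp_continuous_on)
qed

lemma box3:
  fixes Om :: "('p::metric_space \<times> complex \<times> complex) set"
  assumes "open Om" "(p,z,w) \<in> Om"
  obtains \<rho> where "\<rho> > 0" "\<And>\<zeta> w'. \<zeta> \<in> cball z \<rho> \<Longrightarrow> w' \<in> cball w \<rho> \<Longrightarrow> (p,\<zeta>,w') \<in> Om"
proof -
  obtain A B where AB: "open A" "open B" "(p,z,w) \<in> A \<times> B" "A \<times> B \<subseteq> Om"
    using open_prod_elim[OF assms] by metis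
  obtain B1 B2 where B: "open B1" "open B2" "(z,w) \<in> B1 \<times> B2" "B1 \<times> B2 \<subseteq> B"
    using open_prod_elim[OF AB(2)] AB(3) by (metis mem_Sigma_iff)
  obtain r1 where r1: "r1 > 0" "cball z r1 \<subseteq> B1" using open_contains_cball B by force
  obtain r2 where r2: "r2 > 0" "cball w r2 \<subseteq> B2" using open_contains_cball B by force
  show ?thesis
  proof (rule that[of "min r1 r2"])
    fix \<zeta> w' assume "\<zeta> \<in> cball z (min r1 r2)" "w' \<in> cball w (min r1 r2)"
    then have "\<zeta> \<in> B1" "w' \<in> B2" using r1 r2 by auto
    then show "(p,\<zeta>,w') \<in> Om" using B AB by blast
  qed (use r1 r2 in auto)
qed

lemma HA:
  fixes G :: "'p::metric_space \<Rightarrow> complex \<Rightarrow> complex \<Rightarrow> complex"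
  assumes Om: "open Om" and cont: "continuous_on Om (\<lambda>(p,z,w). G p z w)"
    and hz: "\<And>p z w. (p,z,w) \<in> Om \<Longrightarrow> (\<lambda>z. G p z w) field_differentiable at z"
    and hw: "\<And>p z w. (p,z,w) \<in> Om \<Longrightarrow> (\<lambda>w. G p z w) field_differentiable at w"
    and rho: "\<rho> > 0" "R > 0"
    and sub: "\<And>\<zeta> w'. \<zeta> \<in> ball z \<rho> \<Longrightarrow> w' \<in> cball w R \<Longrightarrow> (p,\<zeta>,w') \<in> Om"
  shows "((\<lambda>\<zeta>. deriv (\<lambda>w'. G p \<zeta> w') w) has_field_derivative
           integral {0..1} (\<lambda>t. deriv (\<lambda>\<zeta>. G p \<zeta> (circlepath w R t)) z * cker w R w t)) (at z)"
proof -
  define Om' where "Om' = (\<lambda>x::('p\<times>complex)\<times>complex. (fst (fst x), snd x, snd (fst x))) -` Om"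
  have Om'o: "open Om'" unfolding Om'_def
    by (rule continuous_open_vimage[OF Om]) (intro continuous_intros)
  have contG': "continuous_on Om' (\<lambda>(q,\<zeta>). G (fst q) \<zeta> (snd q))"
  proof -
    have hc: "continuous_on Om' (\<lambda>x::('p\<times>complex)\<times>complex. (fst (fst x), snd x, snd (fst x)))"
      by (intro continuous_intros)
    have "(\<lambda>x::('p\<times>complex)\<times>complex. (fst (fst x), snd x, snd (fst x))) ` Om' \<subseteq> Om" unfolding Om'_def by auto
    from continuous_on_compose2[OF cont hc this] show ?thesis by (simp add: split_beta)
  qed
  have cz: "continuous_on Om' (\<lambda>(q,\<zeta>). deriv (\<lambda>\<zeta>. G (fst q) \<zeta> (snd q)) \<zeta>)"
  proof (rule H1[OF Om'o contG'])
    fix q \<zeta> assume "(q, \<zeta>) \<in> Om'"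
    then have "(fst q, \<zeta>, snd q) \<in> Om" unfolding Om'_def by simp
    from hz[OF this] show "(\<lambda>\<zeta>. G (fst q) \<zeta> (snd q)) field_differentiable at \<zeta>" .
  qed
  have circ_in: "circlepath w R t \<in> cball w R" for t
    using norm_circ[of R w t] rho by (simp add: dist_norm norm_minus_commute)
  have eq: "deriv (\<lambda>w'. G p \<zeta> w') w = integral {0..1} (\<lambda>t. G p \<zeta> (circlepath w R t) * cker w R w t)"
    if \<zeta>: "\<zeta> \<in> ball z \<rho>" for \<zeta>
  proof -
    have h: "(\<lambda>w'. G p \<zeta> w') holomorphic_on cball w R"
      unfolding holomorphic_on_def
    proof
      fix w' assume "w' \<in> cball w R"
      from hw[OF sub[OF \<zeta> this]] show "(\<lambda>w'. G p \<zeta> w') field_differentiable at w' within cball w R"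
        by (rule field_differentiable_at_within)
    qed
    show ?thesis
      by (rule DERIV_imp_deriv, rule CD[OF holomorphic_on_imp_continuous_on[OF h] holomorphic_on_subset[OF h]])
         (use rho in auto)
  qed
  have L: "((\<lambda>\<zeta>. integral (cbox 0 1) (\<lambda>t. G p \<zeta> (circlepath w R t) * cker w R w t)) has_field_derivative
       integral (cbox 0 1) (\<lambda>t. deriv (\<lambda>\<zeta>. G p \<zeta> (circlepath w R t)) z * cker w R w t)) (at z within ball z \<rho>)"
  proof (rule leibniz_rule_field_derivative[where fx="\<lambda>\<zeta> t. deriv (\<lambda>\<zeta>. G p \<zeta> (circlepath w R t)) \<zeta> * cker w R w t"
        and f = "\<lambda>\<zeta> t. G p \<zeta> (circlepath w R t) * cker w R w t"])
    fix \<zeta> :: complex and t :: real assume \<zeta>: "\<zeta> \<in> ball z \<rho>" and t: "t \<in> cbox 0 1"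
    have "(p,\<zeta>,circlepath w R t) \<in> Om" using sub[OF \<zeta> circ_in] .
    then have "((\<lambda>\<zeta>. G p \<zeta> (circlepath w R t)) has_field_derivative deriv (\<lambda>\<zeta>. G p \<zeta> (circlepath w R t)) \<zeta>) (at \<zeta>)"
      by (rule field_differentiable_derivI[OF hz])
    then show "((\<lambda>\<zeta>. G p \<zeta> (circlepath w R t) * cker w R w t) has_field_derivative
        deriv (\<lambda>\<zeta>. G p \<zeta> (circlepath w R t)) \<zeta> * cker w R w t) (at \<zeta> within ball z \<rho>)"
      using has_field_derivative_at_within[OF DERIV_cmult_right] by blast
  next
    fix \<zeta> assume \<zeta>: "\<zeta> \<in> ball z \<rho>"
    have c1: "continuous_on (cbox 0 1) (\<lambda>t. G p \<zeta> (circlepath w R t))"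
    proof -
      have hc: "continuous_on (cbox 0 1) (\<lambda>t. (p, \<zeta>, circlepath w R t))"
        unfolding circlepath by (intro continuous_intros)
      have "(\<lambda>t. (p, \<zeta>, circlepath w R t)) ` cbox 0 1 \<subseteq> Om" using sub[OF \<zeta> circ_in] by blast
      from continuous_on_compose2[OF cont hc this] show ?thesis by simp
    qed
    have c2: "continuous_on (cbox 0 1) (\<lambda>t. cker w R w t)"
    proof -
      have hc: "continuous_on (cbox 0 1) (\<lambda>t::real. (w, t))" by (intro continuous_intros)
      have "(\<lambda>t::real. (w, t)) ` cbox 0 1 \<subseteq> ball w R \<times> UNIV" using rho by auto
      from continuous_on_compose2[OF cker_cont hc this] show ?thesis by simp
    qed
    show "(\<lambda>t. G p \<zeta> (circlepath w R t) * cker w R w t) integrable_on cbox 0 1"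
      by (rule integrable_continuous, rule continuous_on_mult[OF c1 c2])
  next
    have hc: "continuous_on (ball z \<rho> \<times> cbox 0 1) (\<lambda>y. ((p, circlepath w R (snd y)), fst y))"
      unfolding circlepath by (intro continuous_intros)
    have "(\<lambda>y. ((p, circlepath w R (snd y)), fst y)) ` (ball z \<rho> \<times> cbox 0 1) \<subseteq> Om'"
    proof
      fix x assume "x \<in> (\<lambda>y. ((p, circlepath w R (snd y)), fst y)) ` (ball z \<rho> \<times> cbox 0 1)"
      then obtain y where "y \<in> ball z \<rho> \<times> cbox 0 1" "x = ((p, circlepath w R (snd y)), fst y)" by blast
      then show "x \<in> Om'" unfolding Om'_def using sub[OF _ circ_in] by (auto simp: mem_Times_iff)
    qed
    from continuous_on_compose2[OF cz hc this]
    have c1: "continuous_on (ball z \<rho> \<times> cbox 0 1) (\<lambda>y. deriv (\<lambda>\<zeta>. G p \<zeta> (circlepath w R (snd y))) (fst y))"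
      by simp
    have hc2: "continuous_on (ball z \<rho> \<times> cbox 0 1) (\<lambda>y::complex\<times>real. (w, snd y))" by (intro continuous_intros)
    have "(\<lambda>y::complex\<times>real. (w, snd y)) ` (ball z \<rho> \<times> cbox 0 1) \<subseteq> ball w R \<times> UNIV" using rho by auto
    from continuous_on_compose2[OF cker_cont hc2 this]
    have c2: "continuous_on (ball z \<rho> \<times> cbox 0 1) (\<lambda>y. cker w R w (snd y))" by simp
    have "continuous_on (ball z \<rho> \<times> cbox 0 1)
        (\<lambda>y. deriv (\<lambda>\<zeta>. G p \<zeta> (circlepath w R (snd y))) (fst y) * cker w R w (snd y))"
      by (rule continuous_on_mult[OF c1 c2])
    then show "continuous_on (ball z \<rho> \<times> cbox 0 1)
        (\<lambda>(\<zeta>, t). deriv (\<lambda>\<zeta>. G p \<zeta> (circlepath w R t)) \<zeta> * cker w R w t)"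
      by (simp add: split_beta)
  qed (use rho in simp_all)
  then have L': "((\<lambda>\<zeta>. integral {0..1} (\<lambda>t. G p \<zeta> (circlepath w R t) * cker w R w t)) has_field_derivative
       integral {0..1} (\<lambda>t. deriv (\<lambda>\<zeta>. G p \<zeta> (circlepath w R t)) z * cker w R w t)) (at z)"
  proof -
    have "at z within ball z \<rho> = at z" using rho by (intro at_within_open) auto
    then show ?thesis using L by (simp only: cbox_interval)
  qed
  show ?thesis
  proof (rule has_field_derivative_transform_within_open[OF L'])
    show "open (ball z \<rho>)" by simp
    show "z \<in> ball z \<rho>" using rho by simp
  qed (rule eq[symmetric])
qed

lemma HAd:
  fixes G :: "'p::metric_space \<Rightarrow> complex \<Rightarrow> complex \<Rightarrow> complex"
  assumes Om: "open Om" and cont: "continuous_on Om (\<lambda>(p,z,w). G p z w)"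
    and hz: "\<And>p z w. (p,z,w) \<in> Om \<Longrightarrow> (\<lambda>z. G p z w) field_differentiable at z"
    and hw: "\<And>p z w. (p,z,w) \<in> Om \<Longrightarrow> (\<lambda>w. G p z w) field_differentiable at w"
    and pzw: "(p,z,w) \<in> Om"
  shows "(\<lambda>\<zeta>. deriv (\<lambda>w'. G p \<zeta> w') w) field_differentiable at z"
proof -
  obtain \<rho> where rho: "\<rho> > 0" "\<And>\<zeta> w'. \<zeta> \<in> cball z \<rho> \<Longrightarrow> w' \<in> cball w \<rho> \<Longrightarrow> (p,\<zeta>,w') \<in> Om"
    using box3[OF Om pzw] by metis
  have "\<And>\<zeta> w'. \<zeta> \<in> ball z \<rho> \<Longrightarrow> w' \<in> cball w \<rho> \<Longrightarrow> (p,\<zeta>,w') \<in> Om"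
    using rho(2) by auto
  from HA[OF Om cont hz hw rho(1) rho(1) this] show ?thesis
    unfolding field_differentiable_def by blast
qed

lemma H2:
  fixes G :: "'p::metric_space \<Rightarrow> complex \<Rightarrow> complex \<Rightarrow> complex"
  assumes Om: "open Om" and cont: "continuous_on Om (\<lambda>(p,z,w). G p z w)"
    and hz: "\<And>p z w. (p,z,w) \<in> Om \<Longrightarrow> (\<lambda>z. G p z w) field_differentiable at z"
    and hw: "\<And>p z w. (p,z,w) \<in> Om \<Longrightarrow> (\<lambda>w. G p z w) field_differentiable at w"
    and pzw: "(p,z,w) \<in> Om"
  shows "((\<lambda>w'. deriv (\<lambda>\<zeta>. G p \<zeta> w') z) has_field_derivative deriv (\<lambda>\<zeta>. deriv (\<lambda>w'. G p \<zeta> w') w) z) (at w)"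
proof -
  obtain \<rho> where rho: "\<rho> > 0" "\<And>\<zeta> w'. \<zeta> \<in> cball z \<rho> \<Longrightarrow> w' \<in> cball w \<rho> \<Longrightarrow> (p,\<zeta>,w') \<in> Om"
    using box3[OF Om pzw] by metis
  have "\<And>\<zeta> w'. \<zeta> \<in> ball z \<rho> \<Longrightarrow> w' \<in> cball w \<rho> \<Longrightarrow> (p,\<zeta>,w') \<in> Om"
    using rho(2) by auto
  from HA[OF Om cont hz hw rho(1) rho(1) this]
  have d1: "deriv (\<lambda>\<zeta>. deriv (\<lambda>w'. G p \<zeta> w') w) z =
      integral {0..1} (\<lambda>t. deriv (\<lambda>\<zeta>. G p \<zeta> (circlepath w \<rho> t)) z * cker w \<rho> w t)"
    by (rule DERIV_imp_deriv)
  define Om2 where "Om2 = (\<lambda>x::'p\<times>complex\<times>complex. (fst x, snd (snd x), fst (snd x))) -` Om"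
  have Om2o: "open Om2" unfolding Om2_def
    by (rule continuous_open_vimage[OF Om]) (intro continuous_intros)
  have cont2: "continuous_on Om2 (\<lambda>(p,a,b). G p b a)"
  proof -
    have hc: "continuous_on Om2 (\<lambda>x::'p\<times>complex\<times>complex. (fst x, snd (snd x), fst (snd x)))"
      by (intro continuous_intros)
    have "(\<lambda>x::'p\<times>complex\<times>complex. (fst x, snd (snd x), fst (snd x))) ` Om2 \<subseteq> Om" unfolding Om2_def by auto
    from continuous_on_compose2[OF cont hc this] show ?thesis by (simp add: split_beta)
  qed
  have hol: "(\<lambda>w'. deriv (\<lambda>\<zeta>. G p \<zeta> w') z) field_differentiable at w'" if "w' \<in> cball w \<rho>" for w'
  proof -
    have mem: "(p, w', z) \<in> Om2" unfolding Om2_def using rho that by auto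
    have hz2: "\<And>q a b. (q,a,b) \<in> Om2 \<Longrightarrow> (\<lambda>a. G q b a) field_differentiable at a"
      using hw unfolding Om2_def by auto
    have hw2: "\<And>q a b. (q,a,b) \<in> Om2 \<Longrightarrow> (\<lambda>b. G q b a) field_differentiable at b"
      using hz unfolding Om2_def by auto
    from HAd[where G="\<lambda>q a b. G q b a", OF Om2o cont2 hz2 hw2 mem] show ?thesis by simp
  qed
  have h: "(\<lambda>w'. deriv (\<lambda>\<zeta>. G p \<zeta> w') z) holomorphic_on cball w \<rho>"
    unfolding holomorphic_on_def using hol field_differentiable_at_within by blast
  have "((\<lambda>w'. deriv (\<lambda>\<zeta>. G p \<zeta> w') z) has_field_derivative
      integral {0..1} (\<lambda>t. deriv (\<lambda>\<zeta>. G p \<zeta> (circlepath w \<rho> t)) z * cker w \<rho> w t)) (at w)"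
    by (rule CD[OF holomorphic_on_imp_continuous_on[OF h] holomorphic_on_subset[OF h]]) (use rho in auto)
  then show ?thesis using d1 by simp
qed

lemma H1_gen:
  fixes F :: "pt4 \<Rightarrow> complex" and emb :: "'p::metric_space \<times> complex \<Rightarrow> pt4" and proj :: "pt4 \<Rightarrow> 'p \<times> complex"
  assumes U: "open U" and cF: "continuous_on U F"
    and ce: "continuous_on UNIV emb" and cp: "continuous_on UNIV proj"
    and ep: "\<And>x. emb (proj x) = x"
    and d: "\<And>q z. emb (q,z) \<in> U \<Longrightarrow> (\<lambda>z. F (emb (q,z))) field_differentiable at z"
  shows "continuous_on U (\<lambda>x. deriv (\<lambda>z. F (emb (fst (proj x), z))) (snd (proj x)))"
proof -
  define Om where "Om = emb -` U"
  have Omo: "open Om" unfolding Om_def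
    using ce U by (simp add: continuous_on_open_vimage)
  have c1: "continuous_on Om (\<lambda>(q,z). F (emb (q,z)))"
  proof -
    have "continuous_on Om emb" using ce by (rule continuous_on_subset) simp
    moreover have "emb ` Om \<subseteq> U" unfolding Om_def by auto
    ultimately have "continuous_on Om (\<lambda>x. F (emb x))" using continuous_on_compose2[OF cF] by blast
    then show ?thesis by (simp add: split_beta)
  qed
  have c2: "continuous_on Om (\<lambda>(q,z). deriv (\<lambda>z. F (emb (q,z))) z)"
    by (rule H1[OF Omo c1]) (auto simp: Om_def intro: d)
  have "continuous_on U proj" using cp by (rule continuous_on_subset) simp
  moreover have "proj ` U \<subseteq> Om" unfolding Om_def using ep by auto
  ultimately have "continuous_on U (\<lambda>x. (\<lambda>(q,z). deriv (\<lambda>z. F (emb (q,z))) z) (proj x))"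
    using continuous_on_compose2[OF c2] by blast
  then show ?thesis by (simp add: split_beta)
qed

lemma H2_gen:
  fixes F :: "pt4 \<Rightarrow> complex" and emb :: "'p::metric_space \<times> complex \<times> complex \<Rightarrow> pt4"
  assumes U: "open U" and cF: "continuous_on U F"
    and ce: "continuous_on UNIV emb"
    and dz: "\<And>q z w. emb (q,z,w) \<in> U \<Longrightarrow> (\<lambda>z. F (emb (q,z,w))) field_differentiable at z"
    and dw: "\<And>q z w. emb (q,z,w) \<in> U \<Longrightarrow> (\<lambda>w. F (emb (q,z,w))) field_differentiable at w"
    and x: "emb (q,z,w) \<in> U"
  shows "((\<lambda>w'. deriv (\<lambda>\<zeta>. F (emb (q,\<zeta>,w'))) z) has_field_derivative
          deriv (\<lambda>\<zeta>. deriv (\<lambda>w'. F (emb (q,\<zeta>,w'))) w) z) (at w)"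
proof -
  define Om where "Om = emb -` U"
  have Omo: "open Om" unfolding Om_def
    using ce U by (simp add: continuous_on_open_vimage)
  have c1: "continuous_on Om (\<lambda>(q,z,w). F (emb (q,z,w)))"
  proof -
    have "continuous_on Om emb" using ce by (rule continuous_on_subset) simp
    moreover have "emb ` Om \<subseteq> U" unfolding Om_def by auto
    ultimately have "continuous_on Om (\<lambda>x. F (emb x))" using continuous_on_compose2[OF cF] by blast
    then show ?thesis by (simp add: split_beta)
  qed
  show ?thesis
    by (rule H2[OF Omo c1]) (auto simp: Om_def intro: dz dw x)
qed

definition pd_e :: "fun4 \<Rightarrow> fun4" where
  "pd_e f a b c d = deriv (\<lambda>v. f a b c v) d"

lemma hol4_cont: "hol4 U f \<Longrightarrow> continuous_on U (\<lambda>(a,b,c,d). f a b c d)"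
  by (simp add: hol4_def)

lemma hol4_d:
  assumes "hol4 U f" "(a,b,c,d) \<in> U"
  shows "(\<lambda>v. f v b c d) field_differentiable at a" "(\<lambda>v. f a v c d) field_differentiable at b"
        "(\<lambda>v. f a b v d) field_differentiable at c" "(\<lambda>v. f a b c v) field_differentiable at d"
  using assms unfolding hol4_def by fast+

lemma cont_u1:
  assumes h: "hol4 U f" shows "continuous_on U (\<lambda>(a,b,c,d). pd_u1 f a b c d)"
proof -
  have "continuous_on U (\<lambda>x. deriv (\<lambda>z. (\<lambda>(a,b,c,d). f a b c d) ((\<lambda>(q,z). (z,q)) (fst ((\<lambda>x. (snd x, fst x)) x), z)))
     (snd ((\<lambda>x. (snd x, fst x)) x)))"
    by (rule H1_gen[OF _ hol4_cont[OF h]]) (use h in \<open>auto simp: hol4_def split_beta intro!: continuous_intros\<close>)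
  then show ?thesis by (simp add: split_beta pd_u1_def)
qed

lemma cont_u2:
  assumes h: "hol4 U f" shows "continuous_on U (\<lambda>(a,b,c,d). pd_u2 f a b c d)"
proof -
  have "continuous_on U (\<lambda>x. deriv (\<lambda>z. (\<lambda>(a,b,c,d). f a b c d) ((\<lambda>(q,z). (fst q, z, snd q)) (fst ((\<lambda>x. ((fst x, snd (snd x)), fst (snd x))) x), z)))
     (snd ((\<lambda>x. ((fst x, snd (snd x)), fst (snd x))) x)))"
    by (rule H1_gen[OF _ hol4_cont[OF h]]) (use h in \<open>auto simp: hol4_def split_beta intro!: continuous_intros\<close>)
  then show ?thesis by (simp add: split_beta pd_u2_def)
qed

lemma cont_x:
  assumes h: "hol4 U f" shows "continuous_on U (\<lambda>(a,b,c,d). pd_x f a b c d)"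
proof -
  have "continuous_on U (\<lambda>x. deriv (\<lambda>z. (\<lambda>(a,b,c,d). f a b c d) ((\<lambda>(q,z). (fst (fst q), snd (fst q), z, snd q)) (fst ((\<lambda>x. (((fst x, fst (snd x)), snd (snd (snd x))), fst (snd (snd x)))) x), z)))
     (snd ((\<lambda>x. (((fst x, fst (snd x)), snd (snd (snd x))), fst (snd (snd x)))) x)))"
    by (rule H1_gen[OF _ hol4_cont[OF h]]) (use h in \<open>auto simp: hol4_def split_beta intro!: continuous_intros\<close>)
  then show ?thesis by (simp add: split_beta pd_x_def)
qed

lemma cont_e:
  assumes h: "hol4 U f" shows "continuous_on U (\<lambda>(a,b,c,d). pd_e f a b c d)"
proof -
  have "continuous_on U (\<lambda>x. deriv (\<lambda>z. (\<lambda>(a,b,c,d). f a b c d) ((\<lambda>(q,z). (fst q, fst (snd q), snd (snd q), z)) (fst ((\<lambda>x. ((fst x, fst (snd x), fst (snd (snd x))), snd (snd (snd x)))) x), z)))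
     (snd ((\<lambda>x. ((fst x, fst (snd x), fst (snd (snd x))), snd (snd (snd x)))) x)))"
    by (rule H1_gen[OF _ hol4_cont[OF h]]) (use h in \<open>auto simp: hol4_def split_beta intro!: continuous_intros\<close>)
  then show ?thesis by (simp add: split_beta pd_e_def)
qed

lemma M1:
  assumes h: "hol4 U f" and x: "(a,b,c,d) \<in> U"
  shows "((\<lambda>v. pd_u2 f v b c d) has_field_derivative pd_u2 (pd_u1 f) a b c d) (at a)"
proof -
  have "((\<lambda>w'. deriv (\<lambda>\<zeta>. (\<lambda>(a,b,c,d). f a b c d) ((\<lambda>(q,z,w). (w,z,q)) ((c,d),\<zeta>,w'))) b) has_field_derivative
          deriv (\<lambda>\<zeta>. deriv (\<lambda>w'. (\<lambda>(a,b,c,d). f a b c d) ((\<lambda>(q,z,w). (w,z,q)) ((c,d),\<zeta>,w'))) a) b) (at a)"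
    by (rule H2_gen[OF _ hol4_cont[OF h]]) (use h x in \<open>auto simp: hol4_def split_beta intro!: continuous_intros\<close>)
  then show ?thesis by (simp add: split_beta pd_u1_def pd_u2_def pd_x_def)
qed

lemma M2:
  assumes h: "hol4 U f" and x: "(a,b,c,d) \<in> U"
  shows "((\<lambda>v. pd_u1 f a v c d) has_field_derivative pd_u1 (pd_u2 f) a b c d) (at b)"
proof -
  have "((\<lambda>w'. deriv (\<lambda>\<zeta>. (\<lambda>(a,b,c,d). f a b c d) ((\<lambda>(q,z,w). (z,w,q)) ((c,d),\<zeta>,w'))) a) has_field_derivative
          deriv (\<lambda>\<zeta>. deriv (\<lambda>w'. (\<lambda>(a,b,c,d). f a b c d) ((\<lambda>(q,z,w). (z,w,q)) ((c,d),\<zeta>,w'))) b) a) (at b)"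
    by (rule H2_gen[OF _ hol4_cont[OF h]]) (use h x in \<open>auto simp: hol4_def split_beta intro!: continuous_intros\<close>)
  then show ?thesis by (simp add: split_beta pd_u1_def pd_u2_def pd_x_def)
qed

lemma M3:
  assumes h: "hol4 U f" and x: "(a,b,c,d) \<in> U"
  shows "((\<lambda>v. pd_x f a v c d) has_field_derivative pd_x (pd_u2 f) a b c d) (at b)"
proof -
  have "((\<lambda>w'. deriv (\<lambda>\<zeta>. (\<lambda>(a,b,c,d). f a b c d) ((\<lambda>(q,z,w). (fst q,w,z,snd q)) ((a,d),\<zeta>,w'))) c) has_field_derivative
          deriv (\<lambda>\<zeta>. deriv (\<lambda>w'. (\<lambda>(a,b,c,d). f a b c d) ((\<lambda>(q,z,w). (fst q,w,z,snd q)) ((a,d),\<zeta>,w'))) b) c) (at b)"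
    by (rule H2_gen[OF _ hol4_cont[OF h]]) (use h x in \<open>auto simp: hol4_def split_beta intro!: continuous_intros\<close>)
  then show ?thesis by (simp add: split_beta pd_u1_def pd_u2_def pd_x_def)
qed

lemma M4:
  assumes h: "hol4 U f" and x: "(a,b,c,d) \<in> U"
  shows "((\<lambda>v. pd_x f v b c d) has_field_derivative pd_x (pd_u1 f) a b c d) (at a)"
proof -
  have "((\<lambda>w'. deriv (\<lambda>\<zeta>. (\<lambda>(a,b,c,d). f a b c d) ((\<lambda>(q,z,w). (w,fst q,z,snd q)) ((b,d),\<zeta>,w'))) c) has_field_derivative
          deriv (\<lambda>\<zeta>. deriv (\<lambda>w'. (\<lambda>(a,b,c,d). f a b c d) ((\<lambda>(q,z,w). (w,fst q,z,snd q)) ((b,d),\<zeta>,w'))) a) c) (at a)"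
    by (rule H2_gen[OF _ hol4_cont[OF h]]) (use h x in \<open>auto simp: hol4_def split_beta intro!: continuous_intros\<close>)
  then show ?thesis by (simp add: split_beta pd_u1_def pd_u2_def pd_x_def)
qed

lemma M5:
  assumes h: "hol4 U f" and x: "(a,b,c,d) \<in> U"
  shows "((\<lambda>v. pd_u1 f a b v d) has_field_derivative pd_u1 (pd_x f) a b c d) (at c)"
proof -
  have "((\<lambda>w'. deriv (\<lambda>\<zeta>. (\<lambda>(a,b,c,d). f a b c d) ((\<lambda>(q,z,w). (z,fst q,w,snd q)) ((b,d),\<zeta>,w'))) a) has_field_derivative
          deriv (\<lambda>\<zeta>. deriv (\<lambda>w'. (\<lambda>(a,b,c,d). f a b c d) ((\<lambda>(q,z,w). (z,fst q,w,snd q)) ((b,d),\<zeta>,w'))) c) a) (at c)"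
    by (rule H2_gen[OF _ hol4_cont[OF h]]) (use h x in \<open>auto simp: hol4_def split_beta intro!: continuous_intros\<close>)
  then show ?thesis by (simp add: split_beta pd_u1_def pd_u2_def pd_x_def)
qed

lemma hol2_d: "hol2 S g \<Longrightarrow> (h, e) \<in> S \<Longrightarrow> (\<lambda>v. g v e) field_differentiable at h"
  unfolding hol2_def by fast

definition kk :: "(complex \<Rightarrow> complex \<Rightarrow> complex) \<Rightarrow> (complex \<Rightarrow> complex \<Rightarrow> complex) \<Rightarrow> complex \<Rightarrow> complex \<Rightarrow> complex \<Rightarrow> complex" where
  "kk \<chi>0 \<chi>1 h c d = deriv (\<lambda>h. \<chi>0 h d) h + c * deriv (\<lambda>h. \<chi>1 h d) h"

lemma ZD:
  assumes h0: "hol2 S \<chi>0" and h1: "hol2 S \<chi>1" and m: "(a*b, d) \<in> S"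
  shows "((\<lambda>v. Z_u1 \<chi>0 \<chi>1 v b c d) has_field_derivative (kk \<chi>0 \<chi>1 (a*b) c d * b * a + chi \<chi>0 \<chi>1 (a*b) c d)) (at a)"
    and "((\<lambda>v. Z_u1 \<chi>0 \<chi>1 a v c d) has_field_derivative (kk \<chi>0 \<chi>1 (a*b) c d * a * a)) (at b)"
    and "((\<lambda>v. Z_u2 \<chi>0 \<chi>1 v b c d) has_field_derivative - (kk \<chi>0 \<chi>1 (a*b) c d * b * b)) (at a)"
    and "((\<lambda>v. Z_u2 \<chi>0 \<chi>1 a v c d) has_field_derivative - (kk \<chi>0 \<chi>1 (a*b) c d * a * b + chi \<chi>0 \<chi>1 (a*b) c d)) (at b)"
proof -
  define k0 where "k0 = deriv (\<lambda>h. \<chi>0 h d) (a*b)"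
  define k1 where "k1 = deriv (\<lambda>h. \<chi>1 h d) (a*b)"
  have d0: "((\<lambda>h. \<chi>0 h d) has_field_derivative k0) (at (a*b))"
    unfolding k0_def using hol2_d[OF h0 m] by (rule field_differentiable_derivI)
  have d1: "((\<lambda>h. \<chi>1 h d) has_field_derivative k1) (at (a*b))"
    unfolding k1_def using hol2_d[OF h1 m] by (rule field_differentiable_derivI)
  have ga: "((\<lambda>v. v * b) has_field_derivative b) (at a)" by (auto intro!: derivative_eq_intros)
  have gb: "((\<lambda>v. a * v) has_field_derivative a) (at b)" by (auto intro!: derivative_eq_intros)
  have c0a: "((\<lambda>v. \<chi>0 (v * b) d) has_field_derivative k0 * b) (at a)"
    using DERIV_chain2[OF d0 ga] .
  have c1a: "((\<lambda>v. \<chi>1 (v * b) d) has_field_derivative k1 * b) (at a)"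
    using DERIV_chain2[OF d1 ga] .
  have c0b: "((\<lambda>v. \<chi>0 (a * v) d) has_field_derivative k0 * a) (at b)"
    using DERIV_chain2[OF d0 gb] .
  have c1b: "((\<lambda>v. \<chi>1 (a * v) d) has_field_derivative k1 * a) (at b)"
    using DERIV_chain2[OF d1 gb] .
  have kk: "kk \<chi>0 \<chi>1 (a*b) c d = k0 + c * k1" unfolding kk_def k0_def k1_def ..
  show "((\<lambda>v. Z_u1 \<chi>0 \<chi>1 v b c d) has_field_derivative (kk \<chi>0 \<chi>1 (a*b) c d * b * a + chi \<chi>0 \<chi>1 (a*b) c d)) (at a)"
    unfolding Z_u1_def chi_def kk
    by (rule derivative_eq_intros c0a c1a refl | simp add: algebra_simps)+
  show "((\<lambda>v. Z_u1 \<chi>0 \<chi>1 a v c d) has_field_derivative (kk \<chi>0 \<chi>1 (a*b) c d * a * a)) (at b)"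
    unfolding Z_u1_def chi_def kk
    by (rule derivative_eq_intros c0b c1b refl | simp add: algebra_simps)+
  show "((\<lambda>v. Z_u2 \<chi>0 \<chi>1 v b c d) has_field_derivative - (kk \<chi>0 \<chi>1 (a*b) c d * b * b)) (at a)"
    unfolding Z_u2_def chi_def kk
    by (rule derivative_eq_intros c0a c1a refl | simp add: algebra_simps)+
  show "((\<lambda>v. Z_u2 \<chi>0 \<chi>1 a v c d) has_field_derivative - (kk \<chi>0 \<chi>1 (a*b) c d * a * b + chi \<chi>0 \<chi>1 (a*b) c d)) (at b)"
    unfolding Z_u2_def chi_def kk
    by (rule derivative_eq_intros c0b c1b refl | simp add: algebra_simps)+
qed

lemma deriv_local:
  assumes "open S" "x \<in> S" "\<And>y. y \<in> S \<Longrightarrow> f y = g y"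
  shows "deriv f x = deriv g x"
  by (rule deriv_cong_ev[OF eventually_mono[OF eventually_nhds_in_open[OF assms(1,2)]]]) (use assms(3) in auto)

lemma open_sl1: "open (W::pt4 set) \<Longrightarrow> open {v. (v,b,c,d) \<in> W}"
  using continuous_open_vimage[of W "\<lambda>v. (v,b,c,d)"] by (simp add: vimage_def)
lemma open_sl2: "open (W::pt4 set) \<Longrightarrow> open {v. (a,v,c,d) \<in> W}"
  using continuous_open_vimage[of W "\<lambda>v. (a,v,c,d)"] by (simp add: vimage_def)
lemma open_sl3: "open (W::pt4 set) \<Longrightarrow> open {v. (a,b,v,d) \<in> W}"
  using continuous_open_vimage[of W "\<lambda>v. (a,b,v,d)"] by (simp add: vimage_def)
lemma open_sl4: "open (W::pt4 set) \<Longrightarrow> open {v. (a,b,c,v) \<in> W}"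
  using continuous_open_vimage[of W "\<lambda>v. (a,b,c,v)"] by (simp add: vimage_def)

lemma hol4_open: "hol4 U f \<Longrightarrow> open U" by (simp add: hol4_def)

lemma D11:
  assumes h: "hol4 U f" and x: "(a,b,c,d) \<in> U"
  shows "((\<lambda>v. pd_u1 f v b c d) has_field_derivative pd_u1 (pd_u1 f) a b c d) (at a)"
proof -
  define S where "S = {v. (v,b,c,d) \<in> U}"
  have So: "open S" unfolding S_def using open_sl1[OF hol4_open[OF h]] .
  have "(\<lambda>v. f v b c d) holomorphic_on S"
    unfolding holomorphic_on_def S_def using hol4_d(1)[OF h] field_differentiable_at_within by blast
  then have "deriv (\<lambda>v. f v b c d) holomorphic_on S" using So by (rule holomorphic_deriv)
  then have "deriv (\<lambda>v. f v b c d) field_differentiable at a"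
    using So x by (auto simp: S_def intro: holomorphic_on_imp_differentiable_at)
  then show ?thesis unfolding pd_u1_def[abs_def]
    by (simp add: field_differentiable_derivI)
qed

lemma D22:
  assumes h: "hol4 U f" and x: "(a,b,c,d) \<in> U"
  shows "((\<lambda>v. pd_u2 f a v c d) has_field_derivative pd_u2 (pd_u2 f) a b c d) (at b)"
proof -
  define S where "S = {v. (a,v,c,d) \<in> U}"
  have So: "open S" unfolding S_def using open_sl2[OF hol4_open[OF h]] .
  have "(\<lambda>v. f a v c d) holomorphic_on S"
    unfolding holomorphic_on_def S_def using hol4_d(2)[OF h] field_differentiable_at_within by blast
  then have "deriv (\<lambda>v. f a v c d) holomorphic_on S" using So by (rule holomorphic_deriv)
  then have "deriv (\<lambda>v. f a v c d) field_differentiable at b"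
    using So x by (auto simp: S_def intro: holomorphic_on_imp_differentiable_at)
  then show ?thesis unfolding pd_u2_def[abs_def]
    by (simp add: field_differentiable_derivI)
qed

lemma back_pt:
  fixes A B C f :: fun4
  assumes h0: "hol2 S \<chi>0" and h1: "hol2 S \<chi>1" and hf: "hol4 W f"
    and HW: "\<And>a b c d. (a,b,c,d) \<in> W \<Longrightarrow> A a b c d = pd_u2 f a b c d \<and> B a b c d = - pd_u1 f a b c d \<and> C a b c d = 0 \<and>
        vf_apply (Z_u1 \<chi>0 \<chi>1) (Z_u2 \<chi>0 \<chi>1) Z_x f a b c d = 0"
    and p: "(a,b,c,d) \<in> W" and m: "(a*b,d) \<in> S"
  shows "vert_sympl_symm_at \<chi>0 \<chi>1 A B C (a,b,c,d)"
proof -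
  have Wo: "open W" using hf by (simp add: hol4_def)
  note o1 = open_sl1[OF Wo, of b c d] and o2 = open_sl2[OF Wo, of a c d] and o3 = open_sl3[OF Wo, of a b d]
  have eA1: "pd_u1 A a b c d = pd_u1 (pd_u2 f) a b c d"
    unfolding pd_u1_def[of A] pd_u1_def[of "pd_u2 f"]
    by (rule deriv_local[OF o1]) (use p HW in auto)
  have eA2: "pd_u2 A a b c d = pd_u2 (pd_u2 f) a b c d"
    unfolding pd_u2_def[of A] pd_u2_def[of "pd_u2 f"]
    by (rule deriv_local[OF o2]) (use p HW in auto)
  have eA3: "pd_x A a b c d = pd_x (pd_u2 f) a b c d"
    unfolding pd_x_def[of A] pd_x_def[of "pd_u2 f"]
    by (rule deriv_local[OF o3]) (use p HW in auto)
  have eB1: "pd_u1 B a b c d = - pd_u1 (pd_u1 f) a b c d"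
  proof -
    have "pd_u1 B a b c d = deriv (\<lambda>v. - pd_u1 f v b c d) a"
      unfolding pd_u1_def[of B] by (rule deriv_local[OF o1]) (use p HW in auto)
    also have "\<dots> = - pd_u1 (pd_u1 f) a b c d"
      by (rule DERIV_imp_deriv, rule DERIV_minus, rule D11[OF hf p])
    finally show ?thesis .
  qed
  have eB2: "pd_u2 B a b c d = - pd_u1 (pd_u2 f) a b c d"
  proof -
    have "pd_u2 B a b c d = deriv (\<lambda>v. - pd_u1 f a v c d) b"
      unfolding pd_u2_def[of B] by (rule deriv_local[OF o2]) (use p HW in auto)
    also have "\<dots> = - pd_u1 (pd_u2 f) a b c d"
      by (rule DERIV_imp_deriv, rule DERIV_minus, rule M2[OF hf p])
    finally show ?thesis .
  qed
  have eB3: "pd_x B a b c d = - pd_x (pd_u1 f) a b c d"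
  proof -
    have "pd_x B a b c d = deriv (\<lambda>v. - pd_u1 f a b v d) c"
      unfolding pd_x_def[of B] by (rule deriv_local[OF o3]) (use p HW in auto)
    also have "\<dots> = - deriv (\<lambda>v. pd_u1 f a b v d) c"
      by (rule DERIV_imp_deriv, rule DERIV_minus, rule DERIV_deriv_iff_field_differentiable[THEN iffD2])
         (use M5[OF hf p] in \<open>auto simp: field_differentiable_def\<close>)
    finally show ?thesis by (simp add: pd_x_def[of "pd_u1 f"])
  qed
  have eC1: "pd_u1 C a b c d = 0"
  proof -
    have "pd_u1 C a b c d = deriv (\<lambda>v. 0) a"
      unfolding pd_u1_def[of C] by (rule deriv_local[OF o1]) (use p HW in auto)
    then show ?thesis by simp
  qed
  have eC2: "pd_u2 C a b c d = 0"
  proof -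
    have "pd_u2 C a b c d = deriv (\<lambda>v. 0) b"
      unfolding pd_u2_def[of C] by (rule deriv_local[OF o2]) (use p HW in auto)
    then show ?thesis by simp
  qed
  have eC3: "pd_x C a b c d = 0"
  proof -
    have "pd_x C a b c d = deriv (\<lambda>v. 0) c"
      unfolding pd_x_def[of C] by (rule deriv_local[OF o3]) (use p HW in auto)
    then show ?thesis by simp
  qed
  have XY: "pd_u1 (pd_u2 f) a b c d = pd_u2 (pd_u1 f) a b c d"
    unfolding pd_u1_def[of "pd_u2 f"] by (rule DERIV_imp_deriv[OF M1[OF hf p]])
  define k where "k = kk \<chi>0 \<chi>1 (a*b) c d"
  define ch where "ch = chi \<chi>0 \<chi>1 (a*b) c d"
  note Z = ZD[OF h0 h1 m, of c, folded k_def ch_def]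
  have z1: "pd_u1 (Z_u1 \<chi>0 \<chi>1) a b c d = k * b * a + ch" unfolding pd_u1_def by (rule DERIV_imp_deriv[OF Z(1)])
  have z2: "pd_u2 (Z_u1 \<chi>0 \<chi>1) a b c d = k * a * a" unfolding pd_u2_def by (rule DERIV_imp_deriv[OF Z(2)])
  have z3: "pd_u1 (Z_u2 \<chi>0 \<chi>1) a b c d = - (k * b * b)" unfolding pd_u1_def by (rule DERIV_imp_deriv[OF Z(3)])
  have z4: "pd_u2 (Z_u2 \<chi>0 \<chi>1) a b c d = - (k * a * b + ch)" unfolding pd_u2_def by (rule DERIV_imp_deriv[OF Z(4)])
  have zx1: "pd_u1 Z_x a b c d = 0" unfolding pd_u1_def Z_x_def by simp
  have zx2: "pd_u2 Z_x a b c d = 0" unfolding pd_u2_def Z_x_def by simp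
  have zxc: "\<And>v. Z_x v b c d = Z_x a b c d" "\<And>v. Z_x a v c d = Z_x a b c d" by (simp_all add: Z_x_def)
  have E1: "(k * b * a + ch) * pd_u1 f a b c d + Z_u1 \<chi>0 \<chi>1 a b c d * pd_u1 (pd_u1 f) a b c d
      + (- (k * b * b)) * pd_u2 f a b c d + Z_u2 \<chi>0 \<chi>1 a b c d * pd_u2 (pd_u1 f) a b c d
      + Z_x a b c d * pd_x (pd_u1 f) a b c d = 0"
  proof -
    have d: "((\<lambda>v. Z_u1 \<chi>0 \<chi>1 v b c d * pd_u1 f v b c d + Z_u2 \<chi>0 \<chi>1 v b c d * pd_u2 f v b c d
         + Z_x a b c d * pd_x f v b c d) has_field_derivative
        ((k * b * a + ch) * pd_u1 f a b c d + Z_u1 \<chi>0 \<chi>1 a b c d * pd_u1 (pd_u1 f) a b c d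
      + (- (k * b * b)) * pd_u2 f a b c d + Z_u2 \<chi>0 \<chi>1 a b c d * pd_u2 (pd_u1 f) a b c d
      + Z_x a b c d * pd_x (pd_u1 f) a b c d)) (at a)"
      using DERIV_add[OF DERIV_add[OF DERIV_mult[OF Z(1) D11[OF hf p]] DERIV_mult[OF Z(3) M1[OF hf p]]]
          DERIV_cmult[OF M4[OF hf p], of "Z_x a b c d"]]
      by (simp add: algebra_simps)
    have d0: "((\<lambda>v. Z_u1 \<chi>0 \<chi>1 v b c d * pd_u1 f v b c d + Z_u2 \<chi>0 \<chi>1 v b c d * pd_u2 f v b c d
         + Z_x a b c d * pd_x f v b c d) has_field_derivative 0) (at a)"
    proof (rule has_field_derivative_transform_within_open[OF DERIV_const o1])
      show "a \<in> {v. (v, b, c, d) \<in> W}" using p by simp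
      fix y assume "y \<in> {v. (v, b, c, d) \<in> W}"
      then have "vf_apply (Z_u1 \<chi>0 \<chi>1) (Z_u2 \<chi>0 \<chi>1) Z_x f y b c d = 0" using HW by blast
      then show "0 = Z_u1 \<chi>0 \<chi>1 y b c d * pd_u1 f y b c d + Z_u2 \<chi>0 \<chi>1 y b c d * pd_u2 f y b c d
         + Z_x a b c d * pd_x f y b c d"
        unfolding vf_apply_def by (simp add: Z_x_def)
    qed
    show ?thesis using DERIV_unique[OF d d0] .
  qed
  have E2: "(k * a * a) * pd_u1 f a b c d + Z_u1 \<chi>0 \<chi>1 a b c d * pd_u1 (pd_u2 f) a b c d
      + (- (k * a * b + ch)) * pd_u2 f a b c d + Z_u2 \<chi>0 \<chi>1 a b c d * pd_u2 (pd_u2 f) a b c d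
      + Z_x a b c d * pd_x (pd_u2 f) a b c d = 0"
  proof -
    have d: "((\<lambda>v. Z_u1 \<chi>0 \<chi>1 a v c d * pd_u1 f a v c d + Z_u2 \<chi>0 \<chi>1 a v c d * pd_u2 f a v c d
         + Z_x a b c d * pd_x f a v c d) has_field_derivative
        ((k * a * a) * pd_u1 f a b c d + Z_u1 \<chi>0 \<chi>1 a b c d * pd_u1 (pd_u2 f) a b c d
      + (- (k * a * b + ch)) * pd_u2 f a b c d + Z_u2 \<chi>0 \<chi>1 a b c d * pd_u2 (pd_u2 f) a b c d
      + Z_x a b c d * pd_x (pd_u2 f) a b c d)) (at b)"
      using DERIV_add[OF DERIV_add[OF DERIV_mult[OF Z(2) M2[OF hf p]] DERIV_mult[OF Z(4) D22[OF hf p]]]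
          DERIV_cmult[OF M3[OF hf p], of "Z_x a b c d"]]
      by (simp add: algebra_simps)
    have d0: "((\<lambda>v. Z_u1 \<chi>0 \<chi>1 a v c d * pd_u1 f a v c d + Z_u2 \<chi>0 \<chi>1 a v c d * pd_u2 f a v c d
         + Z_x a b c d * pd_x f a v c d) has_field_derivative 0) (at b)"
    proof (rule has_field_derivative_transform_within_open[OF DERIV_const o2])
      show "b \<in> {v. (a, v, c, d) \<in> W}" using p by simp
      fix y assume "y \<in> {v. (a, v, c, d) \<in> W}"
      then have "vf_apply (Z_u1 \<chi>0 \<chi>1) (Z_u2 \<chi>0 \<chi>1) Z_x f a y c d = 0" using HW by blast
      then show "0 = Z_u1 \<chi>0 \<chi>1 a y c d * pd_u1 f a y c d + Z_u2 \<chi>0 \<chi>1 a y c d * pd_u2 f a y c d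
         + Z_x a b c d * pd_x f a y c d"
        unfolding vf_apply_def by (simp add: Z_x_def)
    qed
    show ?thesis using DERIV_unique[OF d d0] .
  qed
  have vals: "A a b c d = pd_u2 f a b c d" "B a b c d = - pd_u1 f a b c d" "C a b c d = 0" using HW[OF p] by auto
  show ?thesis
    unfolding vert_sympl_symm_at_def vf_apply_def prod.case
    unfolding eA1 eA2 eA3 eB1 eB2 eB3 eC1 eC2 eC3 z1 z2 z3 z4 zx1 zx2 vals
    using E1 E2 XY by (simp add: algebra_simps) (simp add: algebra_simps) ?
qed

definition LI :: "complex \<Rightarrow> (complex \<Rightarrow> complex) \<Rightarrow> complex" where
  "LI \<beta> h = integral {0..1} (\<lambda>s. h (of_real s * \<beta>) * \<beta>)"

lemma LI_contour: "LI \<beta> h = contour_integral (linepath 0 \<beta>) h"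
  unfolding LI_def contour_integral_integral vector_derivative_linepath_at
  by (simp add: linepath_def scaleR_conv_of_real)

lemma LI_FTC:
  assumes "closed_segment 0 \<beta> \<subseteq> T" "\<And>t. t \<in> T \<Longrightarrow> (\<phi> has_field_derivative \<phi>' t) (at t within T)"
  shows "LI \<beta> \<phi>' = \<phi> \<beta> - \<phi> 0"
proof -
  have "(\<phi>' has_contour_integral (\<phi> (pathfinish (linepath 0 \<beta>)) - \<phi> (pathstart (linepath 0 \<beta>)))) (linepath 0 \<beta>)"
    by (rule contour_integral_primitive[OF assms(2)]) (use assms(1) in auto)
  then show ?thesis unfolding LI_contour by (simp add: contour_integral_unique)
qed

lemma LI_PRIM:
  assumes T: "open T" "convex T" "0 \<in> T" "z \<in> T" and h: "h holomorphic_on T"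
  shows "((\<lambda>v. LI v h) has_field_derivative h z) (at z)"
proof -
  obtain g where g: "\<And>x. x \<in> T \<Longrightarrow> (g has_field_derivative h x) (at x within T)"
    using holomorphic_convex_primitive'[OF T(2,1) h] by metis
  have eq: "LI v h = g v - g 0" if "v \<in> T" for v
    by (rule LI_FTC[OF closed_segment_subset[OF T(3) that T(2)] g])
  have "(g has_field_derivative h z) (at z)" using g[OF T(4)] at_within_open[OF T(4,1)] by simp
  then have "((\<lambda>v. g v - g 0) has_field_derivative h z) (at z)"
    using DERIV_diff[OF _ DERIV_const] by fastforce
  then show ?thesis
    by (rule has_field_derivative_transform_within_open[OF _ T(1,4)]) (simp add: eq)
qed

lemma LI_cong: "(\<And>s. s \<in> {0..1} \<Longrightarrow> h (of_real s * \<beta>) = h' (of_real s * \<beta>)) \<Longrightarrow> LI \<beta> h = LI \<beta> h'"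
  unfolding LI_def by (rule integral_cong) simp

lemma LI_cmult: "LI \<beta> (\<lambda>t. k * h t) = k * LI \<beta> h"
  unfolding LI_def by (simp add: mult.assoc)

lemma LI_minus: "LI \<beta> (\<lambda>t. - h t) = - LI \<beta> h"
  unfolding LI_def by simp

lemma LI_leib:
  fixes g g' :: "complex \<Rightarrow> complex \<Rightarrow> complex"
  assumes T: "open T" "convex T" "z \<in> T"
    and d: "\<And>v s. v \<in> T \<Longrightarrow> s \<in> {0..1} \<Longrightarrow> ((\<lambda>v. g v (of_real s * \<beta>)) has_field_derivative g' v (of_real s * \<beta>)) (at v)"
    and c': "continuous_on (T \<times> {0..1}) (\<lambda>(v,s). g' v (of_real s * \<beta>))"
    and c: "\<And>v. v \<in> T \<Longrightarrow> continuous_on {0..1} (\<lambda>s. g v (of_real s * \<beta>))"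
  shows "((\<lambda>v. LI \<beta> (g v)) has_field_derivative LI \<beta> (g' z)) (at z)"
proof -
  have "((\<lambda>v. integral (cbox 0 1) (\<lambda>s. g v (of_real s * \<beta>) * \<beta>)) has_field_derivative
      integral (cbox 0 1) (\<lambda>s. g' z (of_real s * \<beta>) * \<beta>)) (at z within T)"
  proof (rule leibniz_rule_field_derivative[where fx="\<lambda>v s. g' v (of_real s * \<beta>) * \<beta>"])
    fix v s assume "v \<in> T" "s \<in> cbox (0::real) 1"
    then show "((\<lambda>v. g v (of_real s * \<beta>) * \<beta>) has_field_derivative g' v (of_real s * \<beta>) * \<beta>) (at v within T)"
      using has_field_derivative_at_within[OF DERIV_cmult_right[OF d]] by (simp add: cbox_interval)
  next
    fix v assume "v \<in> T"
    then show "(\<lambda>s. g v (of_real s * \<beta>) * \<beta>) integrable_on cbox 0 1"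
      unfolding cbox_interval by (intro integrable_continuous_interval continuous_on_mult_right c)
  next
    have "continuous_on (T \<times> {0..1}) (\<lambda>x. g' (fst x) (of_real (snd x) * \<beta>))"
      using c' by (simp add: split_beta)
    then have "continuous_on (T \<times> {0..1}) (\<lambda>x. g' (fst x) (of_real (snd x) * \<beta>) * \<beta>)"
      by (rule continuous_on_mult_right)
    then show "continuous_on (T \<times> cbox 0 1) (\<lambda>(v, s). g' v (of_real s * \<beta>) * \<beta>)"
      by (simp add: split_beta cbox_interval)
  qed (use T in auto)
  then show ?thesis
    unfolding LI_def using at_within_open[OF T(3,1)] by (simp add: cbox_interval)
qed

lemma normP1: "norm a' \<le> norm a \<Longrightarrow> norm (a', q) \<le> norm (a, q)"
  unfolding norm_Pair by (intro real_sqrt_le_mono add_right_mono power_mono) auto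

lemma normP2: "norm b' \<le> norm b \<Longrightarrow> norm (a, b', q) \<le> norm (a, b, q)"
  using normP1[of b' b q] unfolding norm_Pair by (intro real_sqrt_le_mono add_left_mono power_mono) auto

lemma ballP2: "(a,b,c,d) \<in> ball (0::pt4) r \<Longrightarrow> norm b' \<le> norm b \<Longrightarrow> (a,b',c,d) \<in> ball 0 r"
  using normP2[of b' b a "(c,d)"] unfolding mem_ball_0 by linarith

lemma ballP1: "(a,b,c,d) \<in> ball (0::pt4) r \<Longrightarrow> norm a' \<le> norm a \<Longrightarrow> (a',b,c,d) \<in> ball 0 r"
  using normP1[of a' a "(b,c,d)"] unfolding mem_ball_0 by linarith

lemma norm_sb: "s \<in> {0..1} \<Longrightarrow> norm (of_real s * (b::complex)) \<le> norm b"
  by (simp add: norm_mult mult_left_le_one_le)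

lemma conv_sl1: "convex (W::pt4 set) \<Longrightarrow> convex {v. (v,b,c,d) \<in> W}"
  unfolding convex_def
proof (intro allI impI ballI)
  fix x y :: complex and u v :: real
  assume W: "\<forall>x\<in>W. \<forall>y\<in>W. \<forall>u\<ge>0. \<forall>v\<ge>0. u + v = 1 \<longrightarrow> u *\<^sub>R x + v *\<^sub>R y \<in> W"
    and x: "x \<in> {v. (v,b,c,d) \<in> W}" and y: "y \<in> {v. (v,b,c,d) \<in> W}" and uv: "0 \<le> u" "0 \<le> v" "u + v = 1"
  have "u *\<^sub>R (x,b,c,d) + v *\<^sub>R (y,b,c,d) \<in> W" using W x y uv by blast
  moreover have "u *\<^sub>R (x,b,c,d) + v *\<^sub>R (y,b,c,d) = (u *\<^sub>R x + v *\<^sub>R y, b, c, d)"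
    using uv by (simp add: scaleR_add_left[symmetric])
  ultimately show "u *\<^sub>R x + v *\<^sub>R y \<in> {v. (v,b,c,d) \<in> W}" by simp
qed

lemma conv_sl2: "convex (W::pt4 set) \<Longrightarrow> convex {v. (a,v,c,d) \<in> W}"
  unfolding convex_def
proof (intro allI impI ballI)
  fix x y :: complex and u v :: real
  assume W: "\<forall>x\<in>W. \<forall>y\<in>W. \<forall>u\<ge>0. \<forall>v\<ge>0. u + v = 1 \<longrightarrow> u *\<^sub>R x + v *\<^sub>R y \<in> W"
    and x: "x \<in> {v. (a,v,c,d) \<in> W}" and y: "y \<in> {v. (a,v,c,d) \<in> W}" and uv: "0 \<le> u" "0 \<le> v" "u + v = 1"
  have "u *\<^sub>R (a,x,c,d) + v *\<^sub>R (a,y,c,d) \<in> W" using W x y uv by blast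
  moreover have "u *\<^sub>R (a,x,c,d) + v *\<^sub>R (a,y,c,d) = (a, u *\<^sub>R x + v *\<^sub>R y, c, d)"
    using uv by (simp add: scaleR_add_left[symmetric])
  ultimately show "u *\<^sub>R x + v *\<^sub>R y \<in> {v. (a,v,c,d) \<in> W}" by simp
qed

lemma conv_sl3: "convex (W::pt4 set) \<Longrightarrow> convex {v. (a,b,v,d) \<in> W}"
  unfolding convex_def
proof (intro allI impI ballI)
  fix x y :: complex and u v :: real
  assume W: "\<forall>x\<in>W. \<forall>y\<in>W. \<forall>u\<ge>0. \<forall>v\<ge>0. u + v = 1 \<longrightarrow> u *\<^sub>R x + v *\<^sub>R y \<in> W"
    and x: "x \<in> {v. (a,b,v,d) \<in> W}" and y: "y \<in> {v. (a,b,v,d) \<in> W}" and uv: "0 \<le> u" "0 \<le> v" "u + v = 1"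
  have "u *\<^sub>R (a,b,x,d) + v *\<^sub>R (a,b,y,d) \<in> W" using W x y uv by blast
  moreover have "u *\<^sub>R (a,b,x,d) + v *\<^sub>R (a,b,y,d) = (a, b, u *\<^sub>R x + v *\<^sub>R y, d)"
    using uv by (simp add: scaleR_add_left[symmetric])
  ultimately show "u *\<^sub>R x + v *\<^sub>R y \<in> {v. (a,b,v,d) \<in> W}" by simp
qed

lemma conv_sl4: "convex (W::pt4 set) \<Longrightarrow> convex {v. (a,b,c,v) \<in> W}"
  unfolding convex_def
proof (intro allI impI ballI)
  fix x y :: complex and u v :: real
  assume W: "\<forall>x\<in>W. \<forall>y\<in>W. \<forall>u\<ge>0. \<forall>v\<ge>0. u + v = 1 \<longrightarrow> u *\<^sub>R x + v *\<^sub>R y \<in> W"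
    and x: "x \<in> {v. (a,b,c,v) \<in> W}" and y: "y \<in> {v. (a,b,c,v) \<in> W}" and uv: "0 \<le> u" "0 \<le> v" "u + v = 1"
  have "u *\<^sub>R (a,b,c,x) + v *\<^sub>R (a,b,c,y) \<in> W" using W x y uv by blast
  moreover have "u *\<^sub>R (a,b,c,x) + v *\<^sub>R (a,b,c,y) = (a, b, c, u *\<^sub>R x + v *\<^sub>R y)"
    using uv by (simp add: scaleR_add_left[symmetric])
  ultimately show "u *\<^sub>R x + v *\<^sub>R y \<in> {v. (a,b,c,v) \<in> W}" by simp
qed

lemma cc4:
  fixes F :: fun4
  assumes "continuous_on U (\<lambda>(a,b,c,d). F a b c d)"
    "continuous_on X p1" "continuous_on X p2" "continuous_on X p3" "continuous_on X p4"
    "\<And>x. x \<in> X \<Longrightarrow> (p1 x, p2 x, p3 x, p4 x) \<in> U"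
  shows "continuous_on X (\<lambda>x. F (p1 x) (p2 x) (p3 x) (p4 x))"
proof -
  have "continuous_on X (\<lambda>x. (p1 x, p2 x, p3 x, p4 x))" using assms(2-5) by (intro continuous_intros)
  from continuous_on_compose2[OF assms(1) this] assms(6) show ?thesis by auto
qed

definition ff :: "fun4 \<Rightarrow> fun4 \<Rightarrow> fun4" where
  "ff A B a b c d = LI b (\<lambda>t. A a t c d) - LI a (\<lambda>s. B s 0 c d)"

context
  fixes A B :: fun4 and U :: "pt4 set" and r :: real
  assumes hA: "hol4 U A" and hB: "hol4 U B" and rU: "ball (0::pt4) r \<subseteq> U"
begin

lemma Wmem2: "(a,b,c,d) \<in> ball (0::pt4) r \<Longrightarrow> s \<in> {0..1} \<Longrightarrow> (a, of_real s * b, c, d) \<in> ball (0::pt4) r"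
  by (rule ballP2) (auto intro: norm_sb)

lemma Wmem1: "(a,b,c,d) \<in> ball (0::pt4) r \<Longrightarrow> s \<in> {0..1} \<Longrightarrow> (of_real s * a, 0, c, d) \<in> ball (0::pt4) r"
  by (rule ballP1[OF ballP2]) (auto intro: norm_sb)

lemma Wmem0: "(a,b,c,d) \<in> ball (0::pt4) r \<Longrightarrow> (a, 0, c, d) \<in> ball (0::pt4) r"
  by (rule ballP2) auto

lemma dA1:
  assumes p: "(a,b,c,d) \<in> ball (0::pt4) r"
  shows "((\<lambda>v. LI b (\<lambda>t. A v t c d)) has_field_derivative LI b (\<lambda>t. pd_u1 A a t c d)) (at a)"
proof (rule LI_leib[where g="\<lambda>v t. A v t c d" and g'="\<lambda>v t. pd_u1 A v t c d" and T="{v. (v,b,c,d) \<in> ball (0::pt4) r}"])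
  show "open {v. (v,b,c,d) \<in> ball (0::pt4) r}" by (rule open_sl1) simp
  show "convex {v. (v,b,c,d) \<in> ball (0::pt4) r}" by (rule conv_sl1) simp
  show "a \<in> {v. (v,b,c,d) \<in> ball (0::pt4) r}" using p by simp
next
  fix v :: complex and s :: real assume v: "v \<in> {v. (v,b,c,d) \<in> ball (0::pt4) r}" and s: "s \<in> {0..1::real}"
  have "(v, of_real s * b, c, d) \<in> U" using Wmem2[of v b c d s] v s rU by auto
  from hol4_d(1)[OF hA this] show "((\<lambda>v. A v (of_real s * b) c d) has_field_derivative pd_u1 A v (of_real s * b) c d) (at v)"
    unfolding pd_u1_def by (rule field_differentiable_derivI)
next
  have "continuous_on ({v. (v,b,c,d) \<in> ball (0::pt4) r} \<times> {0..1}) (\<lambda>x. pd_u1 A (fst x) (of_real (snd x) * b) c d)"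
    by (rule cc4[OF cont_u1[OF hA]]) (use Wmem2 rU in \<open>auto intro!: continuous_intros\<close>)
  then show "continuous_on ({v. (v,b,c,d) \<in> ball (0::pt4) r} \<times> {0..1}) (\<lambda>(v,s). pd_u1 A v (of_real s * b) c d)"
    by (simp add: split_beta)
next
  fix v :: complex assume v: "v \<in> {v. (v,b,c,d) \<in> ball (0::pt4) r}"
  show "continuous_on {0..1} (\<lambda>s. A v (of_real s * b) c d)"
    by (rule cc4[OF hol4_cont[OF hA]]) (use Wmem2 rU v in \<open>auto intro!: continuous_intros\<close>)
qed

lemma dAx:
  assumes p: "(a,b,c,d) \<in> ball (0::pt4) r"
  shows "((\<lambda>v. LI b (\<lambda>t. A a t v d)) has_field_derivative LI b (\<lambda>t. pd_x A a t c d)) (at c)"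
proof (rule LI_leib[where g="\<lambda>v t. A a t v d" and g'="\<lambda>v t. pd_x A a t v d" and T="{v. (a,b,v,d) \<in> ball (0::pt4) r}"])
  show "open {v. (a,b,v,d) \<in> ball (0::pt4) r}" by (rule open_sl3) simp
  show "convex {v. (a,b,v,d) \<in> ball (0::pt4) r}" by (rule conv_sl3) simp
  show "c \<in> {v. (a,b,v,d) \<in> ball (0::pt4) r}" using p by simp
next
  fix v :: complex and s :: real assume v: "v \<in> {v. (a,b,v,d) \<in> ball (0::pt4) r}" and s: "s \<in> {0..1::real}"
  have "(a, of_real s * b, v, d) \<in> U" using Wmem2[of a b v d s] v s rU by auto
  from hol4_d(3)[OF hA this] show "((\<lambda>v. A a (of_real s * b) v d) has_field_derivative pd_x A a (of_real s * b) v d) (at v)"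
    unfolding pd_x_def by (rule field_differentiable_derivI)
next
  have "continuous_on ({v. (a,b,v,d) \<in> ball (0::pt4) r} \<times> {0..1}) (\<lambda>x. pd_x A a (of_real (snd x) * b) (fst x) d)"
    by (rule cc4[OF cont_x[OF hA]]) (use Wmem2 rU in \<open>auto intro!: continuous_intros\<close>)
  then show "continuous_on ({v. (a,b,v,d) \<in> ball (0::pt4) r} \<times> {0..1}) (\<lambda>(v,s). pd_x A a (of_real s * b) v d)"
    by (simp add: split_beta)
next
  fix v :: complex assume v: "v \<in> {v. (a,b,v,d) \<in> ball (0::pt4) r}"
  show "continuous_on {0..1} (\<lambda>s. A a (of_real s * b) v d)"
    by (rule cc4[OF hol4_cont[OF hA]]) (use Wmem2 rU v in \<open>auto intro!: continuous_intros\<close>)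
qed

lemma dAe:
  assumes p: "(a,b,c,d) \<in> ball (0::pt4) r"
  shows "((\<lambda>v. LI b (\<lambda>t. A a t c v)) has_field_derivative LI b (\<lambda>t. pd_e A a t c d)) (at d)"
proof (rule LI_leib[where g="\<lambda>v t. A a t c v" and g'="\<lambda>v t. pd_e A a t c v" and T="{v. (a,b,c,v) \<in> ball (0::pt4) r}"])
  show "open {v. (a,b,c,v) \<in> ball (0::pt4) r}" by (rule open_sl4) simp
  show "convex {v. (a,b,c,v) \<in> ball (0::pt4) r}" by (rule conv_sl4) simp
  show "d \<in> {v. (a,b,c,v) \<in> ball (0::pt4) r}" using p by simp
next
  fix v :: complex and s :: real assume v: "v \<in> {v. (a,b,c,v) \<in> ball (0::pt4) r}" and s: "s \<in> {0..1::real}"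
  have "(a, of_real s * b, c, v) \<in> U" using Wmem2[of a b c v s] v s rU by auto
  from hol4_d(4)[OF hA this] show "((\<lambda>v. A a (of_real s * b) c v) has_field_derivative pd_e A a (of_real s * b) c v) (at v)"
    unfolding pd_e_def by (rule field_differentiable_derivI)
next
  have "continuous_on ({v. (a,b,c,v) \<in> ball (0::pt4) r} \<times> {0..1}) (\<lambda>x. pd_e A a (of_real (snd x) * b) c (fst x))"
    by (rule cc4[OF cont_e[OF hA]]) (use Wmem2 rU in \<open>auto intro!: continuous_intros\<close>)
  then show "continuous_on ({v. (a,b,c,v) \<in> ball (0::pt4) r} \<times> {0..1}) (\<lambda>(v,s). pd_e A a (of_real s * b) c v)"
    by (simp add: split_beta)
next
  fix v :: complex assume v: "v \<in> {v. (a,b,c,v) \<in> ball (0::pt4) r}"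
  show "continuous_on {0..1} (\<lambda>s. A a (of_real s * b) c v)"
    by (rule cc4[OF hol4_cont[OF hA]]) (use Wmem2 rU v in \<open>auto intro!: continuous_intros\<close>)
qed

lemma dBx:
  assumes p: "(a,b,c,d) \<in> ball (0::pt4) r"
  shows "((\<lambda>v. LI a (\<lambda>t. B t 0 v d)) has_field_derivative LI a (\<lambda>t. pd_x B t 0 c d)) (at c)"
proof (rule LI_leib[where g="\<lambda>v t. B t 0 v d" and g'="\<lambda>v t. pd_x B t 0 v d" and T="{v. (a,b,v,d) \<in> ball (0::pt4) r}"])
  show "open {v. (a,b,v,d) \<in> ball (0::pt4) r}" by (rule open_sl3) simp
  show "convex {v. (a,b,v,d) \<in> ball (0::pt4) r}" by (rule conv_sl3) simp
  show "c \<in> {v. (a,b,v,d) \<in> ball (0::pt4) r}" using p by simp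
next
  fix v :: complex and s :: real assume v: "v \<in> {v. (a,b,v,d) \<in> ball (0::pt4) r}" and s: "s \<in> {0..1::real}"
  have "(of_real s * a, 0, v, d) \<in> U" using Wmem1[of a b v d s] v s rU by auto
  from hol4_d(3)[OF hB this] show "((\<lambda>v. B (of_real s * a) 0 v d) has_field_derivative pd_x B (of_real s * a) 0 v d) (at v)"
    unfolding pd_x_def by (rule field_differentiable_derivI)
next
  have "continuous_on ({v. (a,b,v,d) \<in> ball (0::pt4) r} \<times> {0..1}) (\<lambda>x. pd_x B (of_real (snd x) * a) 0 (fst x) d)"
    by (rule cc4[OF cont_x[OF hB]]) (use Wmem1 rU in \<open>auto intro!: continuous_intros\<close>)
  then show "continuous_on ({v. (a,b,v,d) \<in> ball (0::pt4) r} \<times> {0..1}) (\<lambda>(v,s). pd_x B (of_real s * a) 0 v d)"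
    by (simp add: split_beta)
next
  fix v :: complex assume v: "v \<in> {v. (a,b,v,d) \<in> ball (0::pt4) r}"
  show "continuous_on {0..1} (\<lambda>s. B (of_real s * a) 0 v d)"
    by (rule cc4[OF hol4_cont[OF hB]]) (use Wmem1 rU v in \<open>auto intro!: continuous_intros\<close>)
qed

lemma dBe:
  assumes p: "(a,b,c,d) \<in> ball (0::pt4) r"
  shows "((\<lambda>v. LI a (\<lambda>t. B t 0 c v)) has_field_derivative LI a (\<lambda>t. pd_e B t 0 c d)) (at d)"
proof (rule LI_leib[where g="\<lambda>v t. B t 0 c v" and g'="\<lambda>v t. pd_e B t 0 c v" and T="{v. (a,b,c,v) \<in> ball (0::pt4) r}"])
  show "open {v. (a,b,c,v) \<in> ball (0::pt4) r}" by (rule open_sl4) simp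
  show "convex {v. (a,b,c,v) \<in> ball (0::pt4) r}" by (rule conv_sl4) simp
  show "d \<in> {v. (a,b,c,v) \<in> ball (0::pt4) r}" using p by simp
next
  fix v :: complex and s :: real assume v: "v \<in> {v. (a,b,c,v) \<in> ball (0::pt4) r}" and s: "s \<in> {0..1::real}"
  have "(of_real s * a, 0, c, v) \<in> U" using Wmem1[of a b c v s] v s rU by auto
  from hol4_d(4)[OF hB this] show "((\<lambda>v. B (of_real s * a) 0 c v) has_field_derivative pd_e B (of_real s * a) 0 c v) (at v)"
    unfolding pd_e_def by (rule field_differentiable_derivI)
next
  have "continuous_on ({v. (a,b,c,v) \<in> ball (0::pt4) r} \<times> {0..1}) (\<lambda>x. pd_e B (of_real (snd x) * a) 0 c (fst x))"
    by (rule cc4[OF cont_e[OF hB]]) (use Wmem1 rU in \<open>auto intro!: continuous_intros\<close>)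
  then show "continuous_on ({v. (a,b,c,v) \<in> ball (0::pt4) r} \<times> {0..1}) (\<lambda>(v,s). pd_e B (of_real s * a) 0 c v)"
    by (simp add: split_beta)
next
  fix v :: complex assume v: "v \<in> {v. (a,b,c,v) \<in> ball (0::pt4) r}"
  show "continuous_on {0..1} (\<lambda>s. B (of_real s * a) 0 c v)"
    by (rule cc4[OF hol4_cont[OF hB]]) (use Wmem1 rU v in \<open>auto intro!: continuous_intros\<close>)
qed

lemma dA2:
  assumes p: "(a,b,c,d) \<in> ball (0::pt4) r"
  shows "((\<lambda>v. LI v (\<lambda>t. A a t c d)) has_field_derivative A a b c d) (at b)"
proof (rule LI_PRIM)
  show "open {v. (a,v,c,d) \<in> ball (0::pt4) r}" by (rule open_sl2) simp
  show "convex {v. (a,v,c,d) \<in> ball (0::pt4) r}" by (rule conv_sl2) simp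
  show "0 \<in> {v. (a,v,c,d) \<in> ball (0::pt4) r}" using Wmem0[OF p] by simp
  show "b \<in> {v. (a,v,c,d) \<in> ball (0::pt4) r}" using p by simp
  show "(\<lambda>t. A a t c d) holomorphic_on {v. (a,v,c,d) \<in> ball (0::pt4) r}"
    unfolding holomorphic_on_def
  proof
    fix t assume "t \<in> {v. (a,v,c,d) \<in> ball (0::pt4) r}"
    then have "(a,t,c,d) \<in> U" using rU by auto
    from hol4_d(2)[OF hA this] show "(\<lambda>t. A a t c d) field_differentiable at t within {v. (a,v,c,d) \<in> ball (0::pt4) r}"
      by (rule field_differentiable_at_within)
  qed
qed

lemma dB1:
  assumes p: "(a,b,c,d) \<in> ball (0::pt4) r"
  shows "((\<lambda>v. LI v (\<lambda>s. B s 0 c d)) has_field_derivative B a 0 c d) (at a)"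
proof (rule LI_PRIM)
  show "open {v. (v,0,c,d) \<in> ball (0::pt4) r}" by (rule open_sl1) simp
  show "convex {v. (v,0,c,d) \<in> ball (0::pt4) r}" by (rule conv_sl1) simp
  show "0 \<in> {v. (v,0,c,d) \<in> ball (0::pt4) r}" using ballP1[OF Wmem0[OF p], of 0] by simp
  show "a \<in> {v. (v,0,c,d) \<in> ball (0::pt4) r}" using Wmem0[OF p] by simp
  show "(\<lambda>s. B s 0 c d) holomorphic_on {v. (v,0,c,d) \<in> ball (0::pt4) r}"
    unfolding holomorphic_on_def
  proof
    fix t assume "t \<in> {v. (v,0,c,d) \<in> ball (0::pt4) r}"
    then have "(t,0,c,d) \<in> U" using rU by auto
    from hol4_d(1)[OF hB this] show "(\<lambda>s. B s 0 c d) field_differentiable at t within {v. (v,0,c,d) \<in> ball (0::pt4) r}"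
      by (rule field_differentiable_at_within)
  qed
qed

lemma ff_u1:
  assumes p: "(a,b,c,d) \<in> ball (0::pt4) r"
  shows "((\<lambda>v. ff A B v b c d) has_field_derivative LI b (\<lambda>t. pd_u1 A a t c d) - B a 0 c d) (at a)"
  unfolding ff_def by (rule DERIV_diff[OF dA1[OF p] dB1[OF p]])

lemma ff_u2:
  assumes p: "(a,b,c,d) \<in> ball (0::pt4) r"
  shows "((\<lambda>v. ff A B a v c d) has_field_derivative A a b c d) (at b)"
  unfolding ff_def using DERIV_diff[OF dA2[OF p] DERIV_const] by simp

lemma ff_x:
  assumes p: "(a,b,c,d) \<in> ball (0::pt4) r"
  shows "((\<lambda>v. ff A B a b v d) has_field_derivative LI b (\<lambda>t. pd_x A a t c d) - LI a (\<lambda>t. pd_x B t 0 c d)) (at c)"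
  unfolding ff_def by (rule DERIV_diff[OF dAx[OF p] dBx[OF p]])

lemma ff_e:
  assumes p: "(a,b,c,d) \<in> ball (0::pt4) r"
  shows "((\<lambda>v. ff A B a b c v) has_field_derivative LI b (\<lambda>t. pd_e A a t c d) - LI a (\<lambda>t. pd_e B t 0 c d)) (at d)"
  unfolding ff_def by (rule DERIV_diff[OF dAe[OF p] dBe[OF p]])

lemma ff_cont: "continuous_on (ball (0::pt4) r) (\<lambda>(a,b,c,d). ff A B a b c d)"
proof -
  have c1: "continuous_on (ball (0::pt4) r) (\<lambda>x. integral (cbox 0 1)
      (\<lambda>s. A (fst x) (of_real s * fst (snd x)) (fst (snd (snd x))) (snd (snd (snd x))) * fst (snd x)))"
  proof (rule integral_continuous_on_param[where f="\<lambda>x s. A (fst x) (of_real s * fst (snd x)) (fst (snd (snd x))) (snd (snd (snd x))) * fst (snd x)", unfolded split_beta fst_conv snd_conv])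
    have "continuous_on (ball (0::pt4) r \<times> cbox 0 1) (\<lambda>y. A (fst (fst y)) (of_real (snd y) * fst (snd (fst y))) (fst (snd (snd (fst y)))) (snd (snd (snd (fst y)))))"
    proof (rule cc4[OF hol4_cont[OF hA]])
      fix y :: "pt4 \<times> real" assume "y \<in> ball 0 r \<times> cbox 0 1"
      then show "(fst (fst y), of_real (snd y) * fst (snd (fst y)), fst (snd (snd (fst y))), snd (snd (snd (fst y)))) \<in> U"
        using Wmem2[of "fst (fst y)" "fst (snd (fst y))" "fst (snd (snd (fst y)))" "snd (snd (snd (fst y)))" "snd y"] rU
        by (auto simp: cbox_interval)
    qed (intro continuous_intros)+
    then show "continuous_on (ball (0::pt4) r \<times> cbox 0 1) (\<lambda>y. A (fst (fst y)) (of_real (snd y) * fst (snd (fst y))) (fst (snd (snd (fst y)))) (snd (snd (snd (fst y)))) * fst (snd (fst y)))"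
      by (intro continuous_intros)
  qed
  have c2: "continuous_on (ball (0::pt4) r) (\<lambda>x. integral (cbox 0 1)
      (\<lambda>s. B (of_real s * fst x) 0 (fst (snd (snd x))) (snd (snd (snd x))) * fst x))"
  proof (rule integral_continuous_on_param[where f="\<lambda>x s. B (of_real s * fst x) 0 (fst (snd (snd x))) (snd (snd (snd x))) * fst x", unfolded split_beta fst_conv snd_conv])
    have "continuous_on (ball (0::pt4) r \<times> cbox 0 1) (\<lambda>y. B (of_real (snd y) * fst (fst y)) 0 (fst (snd (snd (fst y)))) (snd (snd (snd (fst y)))))"
    proof (rule cc4[OF hol4_cont[OF hB]])
      fix y :: "pt4 \<times> real" assume "y \<in> ball 0 r \<times> cbox 0 1"
      then show "(of_real (snd y) * fst (fst y), 0, fst (snd (snd (fst y))), snd (snd (snd (fst y)))) \<in> U"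
        using Wmem1[of "fst (fst y)" "fst (snd (fst y))" "fst (snd (snd (fst y)))" "snd (snd (snd (fst y)))" "snd y"] rU
        by (auto simp: cbox_interval)
    qed (intro continuous_intros)+
    then show "continuous_on (ball (0::pt4) r \<times> cbox 0 1) (\<lambda>y. B (of_real (snd y) * fst (fst y)) 0 (fst (snd (snd (fst y)))) (snd (snd (snd (fst y)))) * fst (fst y))"
      by (intro continuous_intros)
  qed
  have "continuous_on (ball (0::pt4) r) (\<lambda>x. integral (cbox 0 1)
      (\<lambda>s. A (fst x) (of_real s * fst (snd x)) (fst (snd (snd x))) (snd (snd (snd x))) * fst (snd x)) -
      integral (cbox 0 1) (\<lambda>s. B (of_real s * fst x) 0 (fst (snd (snd x))) (snd (snd (snd x))) * fst x))"
    by (rule continuous_on_diff[OF c1 c2])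
  then show ?thesis by (simp add: split_beta ff_def LI_def cbox_interval)
qed

lemma ff_hol: "hol4 (ball (0::pt4) r) (ff A B)"
  unfolding hol4_def
proof (intro conjI ballI)
  show "open (ball (0::pt4) r)" by simp
  show "continuous_on (ball (0::pt4) r) (\<lambda>(a,b,c,d). ff A B a b c d)" by (rule ff_cont)
  fix x :: pt4 assume x: "x \<in> ball 0 r"
  obtain a b c d where xe: "x = (a,b,c,d)" by (cases x) auto
  have p: "(a,b,c,d) \<in> ball (0::pt4) r" using x xe by simp
  show "case x of (a, b, c, d) \<Rightarrow>
         (\<lambda>v. ff A B v b c d) field_differentiable at a \<and>
         (\<lambda>v. ff A B a v c d) field_differentiable at b \<and>
         (\<lambda>v. ff A B a b v d) field_differentiable at c \<and>
         (\<lambda>v. ff A B a b c v) field_differentiable at d"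
    unfolding xe field_differentiable_def using ff_u1[OF p] ff_u2[OF p] ff_x[OF p] ff_e[OF p] by auto
qed

end

context
  fixes A B C :: fun4 and U :: "pt4 set" and r :: real and S and \<chi>0 \<chi>1 :: "complex \<Rightarrow> complex \<Rightarrow> complex"
  assumes hA: "hol4 U A" and hB: "hol4 U B" and rU: "ball (0::pt4) r \<subseteq> U"
    and h0: "hol2 S \<chi>0" and h1: "hol2 S \<chi>1"
    and VS: "\<And>p. p \<in> ball (0::pt4) r \<Longrightarrow> vert_sympl_symm_at \<chi>0 \<chi>1 A B C p"
    and QS: "\<And>a b c d. (a,b,c,d) \<in> ball (0::pt4) r \<Longrightarrow> (a*b, d) \<in> S"
begin

lemma VSd:
  assumes p: "(a,b,c,d) \<in> ball (0::pt4) r"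
  shows "C a b c d = 0" "pd_u2 B a b c d = - pd_u1 A a b c d"
    "A a b c d * pd_u1 (Z_u1 \<chi>0 \<chi>1) a b c d + B a b c d * pd_u2 (Z_u1 \<chi>0 \<chi>1) a b c d
       - (Z_u1 \<chi>0 \<chi>1 a b c d * pd_u1 A a b c d + Z_u2 \<chi>0 \<chi>1 a b c d * pd_u2 A a b c d + Z_x a b c d * pd_x A a b c d) = 0"
    "A a b c d * pd_u1 (Z_u2 \<chi>0 \<chi>1) a b c d + B a b c d * pd_u2 (Z_u2 \<chi>0 \<chi>1) a b c d
       - (Z_u1 \<chi>0 \<chi>1 a b c d * pd_u1 B a b c d + Z_u2 \<chi>0 \<chi>1 a b c d * pd_u2 B a b c d + Z_x a b c d * pd_x B a b c d) = 0"
proof -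
  have v: "vert_sympl_symm_at \<chi>0 \<chi>1 A B C (a,b,c,d)" by (rule VS[OF p])
  then show C0: "C a b c d = 0" unfolding vert_sympl_symm_at_def by simp
  from v show "pd_u2 B a b c d = - pd_u1 A a b c d" unfolding vert_sympl_symm_at_def
    by (simp add: eq_neg_iff_add_eq_0 add.commute)
  from v C0 show "A a b c d * pd_u1 (Z_u1 \<chi>0 \<chi>1) a b c d + B a b c d * pd_u2 (Z_u1 \<chi>0 \<chi>1) a b c d
       - (Z_u1 \<chi>0 \<chi>1 a b c d * pd_u1 A a b c d + Z_u2 \<chi>0 \<chi>1 a b c d * pd_u2 A a b c d + Z_x a b c d * pd_x A a b c d) = 0"
    unfolding vert_sympl_symm_at_def vf_apply_def by simp
  from v C0 show "A a b c d * pd_u1 (Z_u2 \<chi>0 \<chi>1) a b c d + B a b c d * pd_u2 (Z_u2 \<chi>0 \<chi>1) a b c d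
       - (Z_u1 \<chi>0 \<chi>1 a b c d * pd_u1 B a b c d + Z_u2 \<chi>0 \<chi>1 a b c d * pd_u2 B a b c d + Z_x a b c d * pd_x B a b c d) = 0"
    unfolding vert_sympl_symm_at_def vf_apply_def by simp
qed

lemma F_u2:
  assumes p: "(a,b,c,d) \<in> ball (0::pt4) r"
  shows "pd_u2 (ff A B) a b c d = A a b c d"
  unfolding pd_u2_def[of "ff A B"] by (rule DERIV_imp_deriv[OF ff_u2[OF hA hB rU p]])

lemma T2props:
  assumes p: "(a,b,c,d) \<in> ball (0::pt4) r"
  shows "closed_segment 0 b \<subseteq> {v. (a,v,c,d) \<in> ball (0::pt4) r}"
proof (rule closed_segment_subset)
  show "0 \<in> {v. (a,v,c,d) \<in> ball (0::pt4) r}" using Wmem0[OF hA hB rU p] by simp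
  show "b \<in> {v. (a,v,c,d) \<in> ball (0::pt4) r}" using p by simp
  show "convex {v. (a,v,c,d) \<in> ball (0::pt4) r}" by (rule conv_sl2) simp
qed

lemma T1props:
  assumes p: "(a,b,c,d) \<in> ball (0::pt4) r"
  shows "closed_segment 0 a \<subseteq> {v. (v,0,c,d) \<in> ball (0::pt4) r}"
proof (rule closed_segment_subset)
  show "0 \<in> {v. (v,0,c,d) \<in> ball (0::pt4) r}" using ballP1[OF Wmem0[OF hA hB rU p], of 0] by simp
  show "a \<in> {v. (v,0,c,d) \<in> ball (0::pt4) r}" using Wmem0[OF hA hB rU p] by simp
  show "convex {v. (v,0,c,d) \<in> ball (0::pt4) r}" by (rule conv_sl1) simp
qed

lemma F_u1:
  assumes p: "(a,b,c,d) \<in> ball (0::pt4) r"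
  shows "pd_u1 (ff A B) a b c d = - B a b c d"
proof -
  have "pd_u1 (ff A B) a b c d = LI b (\<lambda>t. pd_u1 A a t c d) - B a 0 c d"
    unfolding pd_u1_def[of "ff A B"] by (rule DERIV_imp_deriv[OF ff_u1[OF hA hB rU p]])
  also have "LI b (\<lambda>t. pd_u1 A a t c d) = LI b (\<lambda>t. - pd_u2 B a t c d)"
    by (rule LI_cong) (use VSd(2)[OF Wmem2[OF hA hB rU p]] in simp)
  also have "\<dots> = - (B a b c d - B a 0 c d)"
  proof -
    have "LI b (\<lambda>t. pd_u2 B a t c d) = B a b c d - B a 0 c d"
    proof (rule LI_FTC[OF T2props[OF p]])
      fix t assume "t \<in> {v. (a,v,c,d) \<in> ball (0::pt4) r}"
      then have "(a,t,c,d) \<in> U" using rU by auto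
      from field_differentiable_derivI[OF hol4_d(2)[OF hB this]]
      show "((\<lambda>t. B a t c d) has_field_derivative pd_u2 B a t c d) (at t within {v. (a,v,c,d) \<in> ball (0::pt4) r})"
        unfolding pd_u2_def by (rule has_field_derivative_at_within)
    qed
    then show ?thesis by (simp add: LI_minus)
  qed
  finally show ?thesis by simp
qed

lemma Q1:
  assumes q: "(a,t,c,d) \<in> ball (0::pt4) r"
  shows "Z_x a t c d * pd_x A a t c d =
    (kk \<chi>0 \<chi>1 (a*t) c d * a * a) * B a t c d + Z_u1 \<chi>0 \<chi>1 a t c d * pd_u2 B a t c d
    - ((- (kk \<chi>0 \<chi>1 (a*t) c d * a * t + chi \<chi>0 \<chi>1 (a*t) c d)) * A a t c d + Z_u2 \<chi>0 \<chi>1 a t c d * pd_u2 A a t c d)"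
proof -
  note Z = ZD[OF h0 h1 QS[OF q], of c]
  have z1: "pd_u1 (Z_u1 \<chi>0 \<chi>1) a t c d = kk \<chi>0 \<chi>1 (a*t) c d * t * a + chi \<chi>0 \<chi>1 (a*t) c d"
    unfolding pd_u1_def by (rule DERIV_imp_deriv[OF Z(1)])
  have z2: "pd_u2 (Z_u1 \<chi>0 \<chi>1) a t c d = kk \<chi>0 \<chi>1 (a*t) c d * a * a"
    unfolding pd_u2_def by (rule DERIV_imp_deriv[OF Z(2)])
  have e: "pd_u2 B a t c d = - pd_u1 A a t c d" by (rule VSd(2)[OF q])
  from VSd(3)[OF q] show ?thesis unfolding z1 z2 e
    by (simp add: algebra_simps)
qed

lemma Q2:
  assumes q: "(s,0,c,d) \<in> ball (0::pt4) r"
  shows "Z_x s 0 c d * pd_x B s 0 c d =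
    - ((kk \<chi>0 \<chi>1 (s*0) c d * 0 * s + chi \<chi>0 \<chi>1 (s*0) c d) * B s 0 c d + Z_u1 \<chi>0 \<chi>1 s 0 c d * pd_u1 B s 0 c d)"
proof -
  note Z = ZD[OF h0 h1 QS[OF q], of c]
  have z3: "pd_u1 (Z_u2 \<chi>0 \<chi>1) s 0 c d = - (kk \<chi>0 \<chi>1 (s*0) c d * 0 * 0)"
    unfolding pd_u1_def by (rule DERIV_imp_deriv[OF Z(3)])
  have z4: "pd_u2 (Z_u2 \<chi>0 \<chi>1) s 0 c d = - (kk \<chi>0 \<chi>1 (s*0) c d * s * 0 + chi \<chi>0 \<chi>1 (s*0) c d)"
    unfolding pd_u2_def by (rule DERIV_imp_deriv[OF Z(4)])
  have z0: "Z_u2 \<chi>0 \<chi>1 s 0 c d = 0" by (simp add: Z_u2_def)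
  from VSd(4)[OF q] show ?thesis unfolding z3 z4 z0
    by (simp add: algebra_simps)
qed

lemma F_Z:
  assumes p: "(a,b,c,d) \<in> ball (0::pt4) r"
  shows "vf_apply (Z_u1 \<chi>0 \<chi>1) (Z_u2 \<chi>0 \<chi>1) Z_x (ff A B) a b c d = 0"
proof -
  define Zx where "Zx = Z_x a b c d"
  have Zxc: "\<And>t. Z_x a t c d = Zx" "\<And>t. Z_x t 0 c d = Zx" by (simp_all add: Zx_def Z_x_def)
  define phi where "phi t = Z_u1 \<chi>0 \<chi>1 a t c d * B a t c d - Z_u2 \<chi>0 \<chi>1 a t c d * A a t c d" for t
  define phi' where "phi' t = (kk \<chi>0 \<chi>1 (a*t) c d * a * a) * B a t c d + Z_u1 \<chi>0 \<chi>1 a t c d * pd_u2 B a t c d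
    - ((- (kk \<chi>0 \<chi>1 (a*t) c d * a * t + chi \<chi>0 \<chi>1 (a*t) c d)) * A a t c d + Z_u2 \<chi>0 \<chi>1 a t c d * pd_u2 A a t c d)" for t
  define psi where "psi s = Z_u1 \<chi>0 \<chi>1 s 0 c d * B s 0 c d" for s
  define psi' where "psi' s = (kk \<chi>0 \<chi>1 (s*0) c d * 0 * s + chi \<chi>0 \<chi>1 (s*0) c d) * B s 0 c d + Z_u1 \<chi>0 \<chi>1 s 0 c d * pd_u1 B s 0 c d" for s
  have px: "pd_x (ff A B) a b c d = LI b (\<lambda>t. pd_x A a t c d) - LI a (\<lambda>t. pd_x B t 0 c d)"
    unfolding pd_x_def[of "ff A B"] by (rule DERIV_imp_deriv[OF ff_x[OF hA hB rU p]])
  have I1: "Zx * LI b (\<lambda>t. pd_x A a t c d) = phi b - phi 0"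
  proof -
    have "Zx * LI b (\<lambda>t. pd_x A a t c d) = LI b (\<lambda>t. Zx * pd_x A a t c d)" by (simp add: LI_cmult)
    also have "\<dots> = LI b phi'"
    proof (rule LI_cong)
      fix s :: real assume "s \<in> {0..1}"
      from Q1[OF Wmem2[OF hA hB rU p this]] show "Zx * pd_x A a (of_real s * b) c d = phi' (of_real s * b)"
        unfolding phi'_def Zxc .
    qed
    also have "\<dots> = phi b - phi 0"
    proof (rule LI_FTC[OF T2props[OF p]])
      fix t assume t: "t \<in> {v. (a,v,c,d) \<in> ball (0::pt4) r}"
      then have tU: "(a,t,c,d) \<in> U" using rU by auto
      have tW: "(a,t,c,d) \<in> ball (0::pt4) r" using t by simp
      note Z = ZD[OF h0 h1 QS[OF tW], of c]
      have dA: "((\<lambda>t. A a t c d) has_field_derivative pd_u2 A a t c d) (at t)"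
        unfolding pd_u2_def by (rule field_differentiable_derivI[OF hol4_d(2)[OF hA tU]])
      have dB: "((\<lambda>t. B a t c d) has_field_derivative pd_u2 B a t c d) (at t)"
        unfolding pd_u2_def by (rule field_differentiable_derivI[OF hol4_d(2)[OF hB tU]])
      have "(phi has_field_derivative phi' t) (at t)"
        unfolding phi_def[abs_def] phi'_def
        by (rule DERIV_cong[OF DERIV_diff[OF DERIV_mult[OF Z(2) dB] DERIV_mult[OF Z(4) dA]]]) (simp add: algebra_simps)
      then show "(phi has_field_derivative phi' t) (at t within {v. (a,v,c,d) \<in> ball (0::pt4) r})"
        by (rule has_field_derivative_at_within)
    qed
    finally show ?thesis .
  qed
  have I2: "Zx * LI a (\<lambda>t. pd_x B t 0 c d) = - (psi a - psi 0)"
  proof -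
    have "Zx * LI a (\<lambda>t. pd_x B t 0 c d) = LI a (\<lambda>t. Zx * pd_x B t 0 c d)" by (simp add: LI_cmult)
    also have "\<dots> = LI a (\<lambda>t. - psi' t)"
    proof (rule LI_cong)
      fix s :: real assume "s \<in> {0..1}"
      from Q2[OF Wmem1[OF hA hB rU p this]] show "Zx * pd_x B (of_real s * a) 0 c d = - psi' (of_real s * a)"
        unfolding psi'_def Zxc .
    qed
    also have "\<dots> = - LI a psi'" by (rule LI_minus)
    also have "LI a psi' = psi a - psi 0"
    proof (rule LI_FTC[OF T1props[OF p]])
      fix t assume t: "t \<in> {v. (v,0,c,d) \<in> ball (0::pt4) r}"
      then have tU: "(t,0,c,d) \<in> U" using rU by auto
      have tW: "(t,0,c,d) \<in> ball (0::pt4) r" using t by simp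
      note Z = ZD[OF h0 h1 QS[OF tW], of c]
      have dB: "((\<lambda>t. B t 0 c d) has_field_derivative pd_u1 B t 0 c d) (at t)"
        unfolding pd_u1_def by (rule field_differentiable_derivI[OF hol4_d(1)[OF hB tU]])
      have "(psi has_field_derivative psi' t) (at t)"
        unfolding psi_def[abs_def] psi'_def
        by (rule DERIV_cong[OF DERIV_mult[OF Z(1) dB]]) (simp add: algebra_simps)
      then show "(psi has_field_derivative psi' t) (at t within {v. (v,0,c,d) \<in> ball (0::pt4) r})"
        by (rule has_field_derivative_at_within)
    qed
    finally show ?thesis .
  qed
  have psi0: "psi 0 = 0" unfolding psi_def by (simp add: Z_u1_def)
  have phi0: "phi 0 = psi a" unfolding phi_def psi_def by (simp add: Z_u2_def)
  have "Zx * pd_x (ff A B) a b c d = phi b"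
    unfolding px right_diff_distrib I1 I2 psi0 phi0 by simp
  then show ?thesis
    unfolding vf_apply_def F_u1[OF p] F_u2[OF p] Zx_def[symmetric] phi_def by (simp add: algebra_simps)
qed

end

theorem mainTheorem10:
  fixes \<chi>0 \<chi>1 :: "complex \<Rightarrow> complex \<Rightarrow> complex"
    and A B C :: fun4
    and S :: "(complex \<times> complex) set" and U :: "pt4 set"
  assumes chi_hol: "hol2 S \<chi>0" "hol2 S \<chi>1" "(0, 0) \<in> S"
    and chi_nz: "chi \<chi>0 \<chi>1 0 0 0 \<noteq> 0"
    and xi_hol: "hol4 U A" "hol4 U B" "hol4 U C" "(0, 0, 0, 0) \<in> U"
  shows "(\<exists>V. open V \<and> (0, 0, 0, 0) \<in> V \<and> (\<forall>p \<in> V. vert_sympl_symm_at \<chi>0 \<chi>1 A B C p))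
     \<longleftrightarrow>
     (\<exists>W f. open W \<and> (0, 0, 0, 0) \<in> W \<and> hol4 W f \<and>
        (\<forall>(a, b, c, d) \<in> W.
           A a b c d = pd_u2 f a b c d \<and> B a b c d = - pd_u1 f a b c d \<and> C a b c d = 0 \<and>
           vf_apply (Z_u1 \<chi>0 \<chi>1) (Z_u2 \<chi>0 \<chi>1) Z_x f a b c d = 0))"
proof -
  define Q where "Q = {x::pt4. (fst x * fst (snd x), snd (snd (snd x))) \<in> S}"
  have So: "open S" using chi_hol(1) by (simp add: hol2_def)
  have Qo: "open Q" unfolding Q_def
    using continuous_open_vimage[OF So, of "\<lambda>x::pt4. (fst x * fst (snd x), snd (snd (snd x)))"]
    by (simp add: vimage_def continuous_intros)
  have Q0: "(0,0,0,0) \<in> Q" unfolding Q_def using chi_hol(3) by simp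
  have Uo: "open U" using xi_hol(1) by (simp add: hol4_def)
  show ?thesis
  proof
    assume "\<exists>V. open V \<and> (0, 0, 0, 0) \<in> V \<and> (\<forall>p \<in> V. vert_sympl_symm_at \<chi>0 \<chi>1 A B C p)"
    then obtain V where V: "open V" "(0,0,0,0) \<in> V" "\<forall>p \<in> V. vert_sympl_symm_at \<chi>0 \<chi>1 A B C p" by blast
    have "open (V \<inter> U \<inter> Q)" using V Uo Qo by auto
    moreover have "(0::pt4) \<in> V \<inter> U \<inter> Q" using V xi_hol(4) Q0 by (simp add: zero_prod_def)
    ultimately obtain r where r: "r > 0" "ball (0::pt4) r \<subseteq> V \<inter> U \<inter> Q"
      using open_contains_ball by blast
    have rU: "ball (0::pt4) r \<subseteq> U" using r by auto
    have VS: "\<And>p. p \<in> ball (0::pt4) r \<Longrightarrow> vert_sympl_symm_at \<chi>0 \<chi>1 A B C p" using r V by auto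
    have QS: "\<And>a b c d. (a,b,c,d) \<in> ball (0::pt4) r \<Longrightarrow> (a*b, d) \<in> S" using r unfolding Q_def by auto
    show "\<exists>W f. open W \<and> (0, 0, 0, 0) \<in> W \<and> hol4 W f \<and>
        (\<forall>(a, b, c, d) \<in> W.
           A a b c d = pd_u2 f a b c d \<and> B a b c d = - pd_u1 f a b c d \<and> C a b c d = 0 \<and>
           vf_apply (Z_u1 \<chi>0 \<chi>1) (Z_u2 \<chi>0 \<chi>1) Z_x f a b c d = 0)"
    proof (intro exI conjI)
      show "open (ball (0::pt4) r)" by simp
      show "(0,0,0,0) \<in> ball (0::pt4) r" using r by (simp add: zero_prod_def[symmetric])
      show "hol4 (ball 0 r) (ff A B)" by (rule ff_hol[OF xi_hol(1,2) rU])
      show "\<forall>(a, b, c, d) \<in> ball 0 r.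
           A a b c d = pd_u2 (ff A B) a b c d \<and> B a b c d = - pd_u1 (ff A B) a b c d \<and> C a b c d = 0 \<and>
           vf_apply (Z_u1 \<chi>0 \<chi>1) (Z_u2 \<chi>0 \<chi>1) Z_x (ff A B) a b c d = 0"
      proof (intro ballI, clarify)
        fix a b c d assume p: "(a,b,c,d) \<in> ball (0::pt4) r"
        note ctx = xi_hol(1,2) rU chi_hol(1,2) VS QS
        show "A a b c d = pd_u2 (ff A B) a b c d \<and> B a b c d = - pd_u1 (ff A B) a b c d \<and> C a b c d = 0 \<and>
           vf_apply (Z_u1 \<chi>0 \<chi>1) (Z_u2 \<chi>0 \<chi>1) Z_x (ff A B) a b c d = 0"
          using F_u2[OF ctx p] F_u1[OF ctx p] VSd(1)[OF ctx p] F_Z[OF ctx p] by simp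
      qed
    qed
  next
    assume "\<exists>W f. open W \<and> (0, 0, 0, 0) \<in> W \<and> hol4 W f \<and>
        (\<forall>(a, b, c, d) \<in> W.
           A a b c d = pd_u2 f a b c d \<and> B a b c d = - pd_u1 f a b c d \<and> C a b c d = 0 \<and>
           vf_apply (Z_u1 \<chi>0 \<chi>1) (Z_u2 \<chi>0 \<chi>1) Z_x f a b c d = 0)"
    then obtain W f where W: "open W" "(0,0,0,0) \<in> W" "hol4 W f"
      and HW0: "\<forall>(a, b, c, d) \<in> W.
           A a b c d = pd_u2 f a b c d \<and> B a b c d = - pd_u1 f a b c d \<and> C a b c d = 0 \<and>
           vf_apply (Z_u1 \<chi>0 \<chi>1) (Z_u2 \<chi>0 \<chi>1) Z_x f a b c d = 0" by blast
    have HW: "\<And>a b c d. (a,b,c,d) \<in> W \<Longrightarrow> A a b c d = pd_u2 f a b c d \<and> B a b c d = - pd_u1 f a b c d \<and> C a b c d = 0 \<and>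
        vf_apply (Z_u1 \<chi>0 \<chi>1) (Z_u2 \<chi>0 \<chi>1) Z_x f a b c d = 0"
      using HW0 by fast
    show "\<exists>V. open V \<and> (0, 0, 0, 0) \<in> V \<and> (\<forall>p \<in> V. vert_sympl_symm_at \<chi>0 \<chi>1 A B C p)"
    proof (intro exI conjI ballI)
      show "open (W \<inter> Q)" using W Qo by auto
      show "(0,0,0,0) \<in> W \<inter> Q" using W Q0 by auto
      fix p assume p: "p \<in> W \<inter> Q"
      obtain a b c d where pe: "p = (a,b,c,d)" by (cases p) auto
      have pW: "(a,b,c,d) \<in> W" and m: "(a*b, d) \<in> S" using p pe unfolding Q_def by auto
      show "vert_sympl_symm_at \<chi>0 \<chi>1 A B C p"
        unfolding pe by (rule back_pt[OF chi_hol(1,2) W(3) HW pW m])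
    qed
  qed
qed

end
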